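(* The families $\{X^{TSS}_\alpha,\ \alpha\in(0,1/2)\}$ and $\{X^{MTS}_\alpha,\ \alpha\in(0,1/2)\}$ are each uniformly tight.
   Context: Each process is considered as a semimartingale with respect to its (completed) natural filtration on $[0,1]$. Uniform tightness (UT): a family $\{Z^\alpha\}$ of semimartingales (each on its own filtered probability space $(\Omega^\alpha,\mathcal F^\alpha,(\mathcal F^\alpha_t),P^\alpha)$) is uniformly tight if for each $t\in(0,1]$ the set of random variables $\{\int_0^t H(s-)\,dZ^\alpha(s):\ H\in\mathcal H^\alpha,\ \alpha\}$ is bounded in probability uniformly in $\alpha$, i.e. $\lim_{K\to\infty}\sup P^\alpha(|\int_0^tH(s-)dZ^\alpha(s)|>K)=0$, where $\mathcal H^\alpha$ is the set of simple predictable processes $H(s)=H_0+\sum_{i=1}^m H_i1_{(t_i,t_{i+1}]}(s)$ with $0=t_0\le\dots\le t_{m+1}=t$, each $H_i$ being $\mathcal F^\alpha_{t_i}$-measurable with $|H_i|\le1$. Tempered stable subordinator $X^{TSS}_\alpha$: the driftless subordinator with Lévy measure $d\Lambda^{TSS}_\alpha(s)=\frac{1}{\Gamma(1-\alpha)}\frac{e^{-s}}{s^{1+\alpha}}1_{\{s>0\}}ds$. Modified tempered stable process $X^{MTS}_\alpha$, $\alpha\in(0,1/2)$: the Lévy process with triplet $(0,0,\Lambda^{MTS}_\alpha)$, $d\Lambda^{MTS}_\alpha(s)=\frac{1}{\pi}\frac{K_{\alpha+1/2}(|s|)}{|s|^{\alpha+1/2}}ds$ on $s\neq0$, where $K_\nu$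 is the modified Bessel function of the second kind. *)

theory Defs
  imports "HOL-Probability.Probability"
begin

text \<open>Standard integral representation, valid for x > 0 and all real nu:
  K_nu(x) = integral over [0,inf) of exp(-x cosh u) cosh(nu u) du.\<close>
definition bessel_K :: "real \<Rightarrow> real \<Rightarrow> real" where
  "bessel_K \<nu> x = (LINT u:{0..}|lborel. exp (- x * cosh u) * cosh (\<nu> * u))"

definition levy_measure_of_density :: "(real \<Rightarrow> real) \<Rightarrow> real measure" where
  "levy_measure_of_density f = density lborel (\<lambda>s. ennreal (f s))"

definition tss_density :: "real \<Rightarrow> real \<Rightarrow> real" where
  "tss_density \<alpha> s =
     (if s > 0 then exp (- s) / (Gamma (1 - \<alpha>) * s powr (1 + \<alpha>)) else 0)"

definition mts_density :: "real \<Rightarrow> real \<Rightarrow> real" where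
  "mts_density \<alpha> s =
     (if s \<noteq> 0 then bessel_K (\<alpha> + 1/2) \<bar>s\<bar> / (pi * \<bar>s\<bar> powr (\<alpha> + 1/2)) else 0)"

definition triplet_exponent :: "real \<Rightarrow> real \<Rightarrow> real measure \<Rightarrow> real \<Rightarrow> complex" where
  "triplet_exponent b c \<Lambda> u =
     \<i> * complex_of_real (b * u) - complex_of_real (c * u\<^sup>2 / 2)
     + (CLINT x|\<Lambda>. iexp (u * x) - 1 - \<i> * complex_of_real (u * x * indicator {-1..1} x))"

definition driftless_subordinator_exponent :: "real measure \<Rightarrow> real \<Rightarrow> complex" where
  "driftless_subordinator_exponent \<Lambda> u = (CLINT x|\<Lambda>. iexp (u * x) - 1)"

definition levy_process :: "'a measure \<Rightarrow> (real \<Rightarrow> 'a \<Rightarrow> real) \<Rightarrow> (real \<Rightarrow> complex) \<Rightarrow> bool" where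
  "levy_process M X \<psi> \<longleftrightarrow>
     prob_space M \<and>
     (\<forall>t\<ge>0. X t \<in> borel_measurable M) \<and>
     (AE \<omega> in M. X 0 \<omega> = 0) \<and>
     (AE \<omega> in M. \<forall>t\<ge>0. continuous (at_right t) (\<lambda>s. X s \<omega>) \<and>
                         (t > 0 \<longrightarrow> (\<exists>l. ((\<lambda>s. X s \<omega>) \<longlongrightarrow> l) (at_left t)))) \<and>
     (\<forall>(n::nat) (tt::nat \<Rightarrow> real). 0 \<le> tt 0 \<and> (\<forall>i<n. tt i \<le> tt (Suc i)) \<longrightarrow>
        prob_space.indep_vars M (\<lambda>_. borel) (\<lambda>i \<omega>. X (tt (Suc i)) \<omega> - X (tt i) \<omega>) {..<n}) \<and>
     (\<forall>s t u. 0 \<le> s \<and> s \<le> t \<longrightarrow>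
        char (distr M borel (\<lambda>\<omega>. X t \<omega> - X s \<omega>)) u = exp (complex_of_real (t - s) * \<psi> u))"

definition natural_sigma :: "'a measure \<Rightarrow> (real \<Rightarrow> 'a \<Rightarrow> real) \<Rightarrow> real \<Rightarrow> 'a measure" where
  "natural_sigma M X s =
     sigma (space M) {X r -` B \<inter> space M | r B. 0 \<le> r \<and> r \<le> s \<and> B \<in> sets borel}"

text \<open>H is measurable w.r.t. the completed natural filtration at time s: it agrees,
  outside a P-null set, with a sigma(X_r : r <= s)-measurable function.\<close>
definition completed_natural_measurable ::
    "'a measure \<Rightarrow> (real \<Rightarrow> 'a \<Rightarrow> real) \<Rightarrow> real \<Rightarrow> ('a \<Rightarrow> real) \<Rightarrow> bool" where
  "completed_natural_measurable M X s H \<longleftrightarrow>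
     (\<exists>G \<in> borel_measurable (natural_sigma M X s). AE \<omega> in M. H \<omega> = G \<omega>)"

text \<open>All random variables int_0^t H(s-) dX(s), H simple predictable,
  H(s) = H_0 + sum_{i=1}^m H_i 1_{(t_i,t_{i+1}]}(s), 0 = t_0 <= ... <= t_{m+1} = t,
  H_i measurable w.r.t. the completed natural filtration at t_i, |H_i| <= 1.\<close>
definition simple_integrals :: "'a measure \<Rightarrow> (real \<Rightarrow> 'a \<Rightarrow> real) \<Rightarrow> real \<Rightarrow> ('a \<Rightarrow> real) set" where
  "simple_integrals M X t =
     {(\<lambda>\<omega>. H 0 \<omega> * (X t \<omega> - X 0 \<omega>)
            + (\<Sum>i\<in>{1..m}. H i \<omega> * (X (tt (Suc i)) \<omega> - X (tt i) \<omega>))) |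
      (m::nat) (tt::nat \<Rightarrow> real) (H::nat \<Rightarrow> 'a \<Rightarrow> real).
        tt 0 = 0 \<and> tt (Suc m) = t \<and> (\<forall>i\<le>m. tt i \<le> tt (Suc i)) \<and>
        (\<forall>i\<le>m. completed_natural_measurable M X (tt i) (H i) \<and>
                (\<forall>\<omega>\<in>space M. \<bar>H i \<omega>\<bar> \<le> 1))}"

definition uniformly_tight :: "'i set \<Rightarrow> ('i \<Rightarrow> 'a measure) \<Rightarrow> ('i \<Rightarrow> real \<Rightarrow> 'a \<Rightarrow> real) \<Rightarrow> bool" where
  "uniformly_tight I M X \<longleftrightarrow>
     (\<forall>t\<in>{0<..1}.
        ((\<lambda>K. SUP a\<in>I. SUP Y\<in>simple_integrals (M a) (X a) t.
                 measure (completion (M a)) {\<omega> \<in> space (M a). \<bar>Y \<omega>\<bar> > K})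
          \<longlongrightarrow> 0) at_top)"

end

theory Submission
  imports Defs
begin


lemma iexp_re_im: "Re (iexp y) = cos y" "Im (iexp y) = sin y"
  by (simp_all add: Re_exp Im_exp)

lemma cos_sin_taylor1: fixes y :: real shows "\<bar>cos y - 1\<bar> \<le> y^2/2" "\<bar>sin y - y\<bar> \<le> y^2/2"
proof -
  have *: "cmod (iexp y - (1 + \<i> * y)) \<le> \<bar>y\<bar>^2/2"
    using iexp_approx1[of y 1] by (simp add: numeral_2_eq_2)
  have "\<bar>Re (iexp y - (1 + \<i> * y))\<bar> \<le> \<bar>y\<bar>^2/2" using abs_Re_le_cmod * order_trans by blast
  then show "\<bar>cos y - 1\<bar> \<le> y^2/2" by (simp add: iexp_re_im)
  have "\<bar>Im (iexp y - (1 + \<i> * y))\<bar> \<le> \<bar>y\<bar>^2/2" using abs_Im_le_cmod * order_trans by blast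
  then show "\<bar>sin y - y\<bar> \<le> y^2/2" by (simp add: iexp_re_im)
qed

lemma cos_taylor3: fixes y :: real shows "y^2/2 - y^4/24 \<le> 1 - cos y"
proof -
  have *: "cmod (iexp y - (\<Sum>k \<le> 3. (\<i> * y)^k / fact k)) \<le> \<bar>y\<bar>^4/24"
    using iexp_approx1[of y 3] by (simp add: numeral_eq_Suc fact_numeral)
  have s: "(\<Sum>k \<le> 3. (\<i> * y)^k / fact k) = 1 + \<i> * y - y^2/2 - \<i> * y^3/6"
    by (simp add: numeral_eq_Suc fact_numeral power2_eq_square power3_eq_cube field_simps)
  have "\<bar>Re (iexp y - (\<Sum>k \<le> 3. (\<i> * y)^k / fact k))\<bar> \<le> \<bar>y\<bar>^4/24" using abs_Re_le_cmod * order_trans by blast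
  moreover have "\<bar>y\<bar>^4 = y^4" by (simp add: power_abs[symmetric])
  ultimately have "\<bar>cos y - 1 + y^2/2\<bar> \<le> y^4/24" unfolding s by (simp add: iexp_re_im algebra_simps)
  then show ?thesis by linarith
qed

lemma moment_bounds:
  fixes M :: "'a measure" and D :: "'a \<Rightarrow> real" and \<psi> :: "real \<Rightarrow> complex"
  assumes P: "prob_space M" and Dm: "D \<in> borel_measurable M" and \<Delta>: "0 \<le> \<Delta>" and V0: "0 \<le> V"
    and ch: "\<And>u. char (distr M borel D) u = exp (complex_of_real \<Delta> * \<psi> u)"
    and re: "\<And>h. 0 < h \<Longrightarrow> h \<le> 1 \<Longrightarrow> - V * h^2 / 2 \<le> Re (\<psi> h)"
    and im: "\<And>h. 0 < h \<Longrightarrow> h \<le> 1 \<Longrightarrow> \<bar>Im (\<psi> h)\<bar> \<le> C * h"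
  shows "integrable M (\<lambda>x. (D x)^2) \<and> (\<integral>x. (D x)^2 \<partial>M) \<le> \<Delta>*V + (\<Delta>*C)^2
         \<and> \<bar>\<integral>x. D x \<partial>M\<bar> \<le> \<Delta>*C"
proof -
  interpret prob_space M by fact
  have RD: "real_distribution (distr M borel D)" using real_distribution_distr[OF Dm] .
  have intI: "integrable M (\<lambda>x. iexp (u * D x))" for u
    by (rule integrable_iexp) (use Dm in auto)
  have cE: "char (distr M borel D) u = (CLINT x|M. iexp (u * D x))" for u
    unfolding char_def using Dm by (subst integral_distr) auto
  have cosE: "(\<integral>x. cos (u * D x) \<partial>M) = Re (char (distr M borel D) u)" for u
    unfolding cE by (subst integral_Re[OF intI, symmetric]) (simp add: Re_exp)
  have sinE: "(\<integral>x. sin (u * D x) \<partial>M) = Im (char (distr M borel D) u)" for u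
    unfolding cE by (subst integral_Im[OF intI, symmetric]) (simp add: Im_exp)
  have cosI: "integrable M (\<lambda>x. cos (u * D x))" for u
    by (rule integrable_const_bound[of _ 1]) (use Dm in auto)
  have sinI: "integrable M (\<lambda>x. sin (u * D x))" for u
    by (rule integrable_const_bound[of _ 1]) (use Dm in auto)
  have bnd: "1 - Re (char (distr M borel D) h) \<le> \<Delta>*V*h^2/2 + (\<Delta>*C*h)^2/2"
    and bndi: "\<bar>Im (char (distr M borel D) h)\<bar> \<le> \<Delta>*C*h"
    if h: "0 < h" "h \<le> 1" for h
  proof -
    define z where "z = complex_of_real \<Delta> * \<psi> h"
    have c: "char (distr M borel D) h = exp z" using ch z_def by simp
    have "exp (Re z) \<le> 1" using real_distribution.cmod_char_le_1[OF RD, of h] c by simp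
    then have a0: "Re z \<le> 0" by simp
    have ra: "Re z = \<Delta> * Re (\<psi> h)" "Im z = \<Delta> * Im (\<psi> h)" by (simp_all add: z_def)
    have "- (\<Delta> * (V*h^2/2)) \<le> \<Delta> * Re (\<psi> h)" using re[OF h] \<Delta>
      by (metis minus_mult_right mult_left_mono neg_le_iff_le minus_divide_left mult_minus_left)
    then have A: "- Re z \<le> \<Delta>*V*h^2/2" using ra by (simp add: algebra_simps)
    have B: "\<bar>Im z\<bar> \<le> \<Delta>*C*h" using im[OF h] \<Delta> ra
      by (simp add: abs_mult mult_left_mono mult.assoc)
    have e1: "1 - exp (Re z) \<le> - Re z" using exp_ge_add_one_self[of "Re z"] by linarith
    have cb: "1 - cos (Im z) \<le> (Im z)^2/2" using cos_sin_taylor1(1)[of "Im z"] by linarith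
    have cb0: "0 \<le> 1 - cos (Im z)" by simp
    have "exp (Re z) * (1 - cos (Im z)) \<le> 1 * (1 - cos (Im z))"
      using \<open>exp (Re z) \<le> 1\<close> cb0 by (intro mult_right_mono) auto
    have "(Im z)^2 \<le> (\<Delta>*C*h)^2" using B by (metis abs_ge_zero power2_abs power_mono)
    have "1 - Re (exp z) = (1 - exp (Re z)) + exp (Re z) * (1 - cos (Im z))"
      by (simp add: Re_exp algebra_simps)
    then show "1 - Re (char (distr M borel D) h) \<le> \<Delta>*V*h^2/2 + (\<Delta>*C*h)^2/2"
      using c A e1 cb \<open>exp (Re z) * (1 - cos (Im z)) \<le> 1 * (1 - cos (Im z))\<close>
        \<open>(Im z)^2 \<le> (\<Delta>*C*h)^2\<close> by simp
    have "\<bar>Im (exp z)\<bar> = exp (Re z) * \<bar>sin (Im z)\<bar>" by (simp add: Im_exp abs_mult)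
    also have "\<dots> \<le> 1 * \<bar>Im z\<bar>"
      using \<open>exp (Re z) \<le> 1\<close> abs_sin_x_le_abs_x[of "Im z"] by (intro mult_mono) auto
    finally show "\<bar>Im (char (distr M borel D) h)\<bar> \<le> \<Delta>*C*h" using c B by simp
  qed
  define B where "B = \<Delta>*V + (\<Delta>*C)^2"
  have B0: "0 \<le> B" unfolding B_def using V0 \<Delta> by simp
  define hh where "hh n = 1 / (real n + 1)" for n :: nat
  have hh: "0 < hh n" "hh n \<le> 1" for n unfolding hh_def by auto
  have hh0: "hh \<longlonglongrightarrow> 0" unfolding hh_def using LIMSEQ_inverse_real_of_nat by (simp add: inverse_eq_divide add.commute)
  have Eb: "(\<integral>x. 2 * (1 - cos (h * D x)) / h^2 \<partial>M) \<le> B" if h: "0 < h" "h \<le> 1" for h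
  proof -
    have "(\<integral>x. 2 * (1 - cos (h * D x)) / h^2 \<partial>M) = 2 * (1 - Re (char (distr M borel D) h)) / h^2"
      using cosI[of h] by (simp add: cosE[symmetric] prob_space)
    also have "\<dots> \<le> 2 * (\<Delta>*V*h^2/2 + (\<Delta>*C*h)^2/2) / h^2"
      using bnd[OF h] h by (intro divide_right_mono mult_left_mono) auto
    also have "\<dots> = B" using h by (simp add: B_def field_simps power2_eq_square)
    finally show ?thesis .
  qed
  define u where "u n x = ennreal (2 * (1 - cos (hh n * D x)) / (hh n)^2)" for n x
  have um: "u n \<in> borel_measurable M" for n unfolding u_def using Dm by measurable
  have ui: "integral\<^sup>N M (u n) \<le> ennreal B" for n
  proof -
    have "integral\<^sup>N M (u n) = ennreal (\<integral>x. 2 * (1 - cos (hh n * D x)) / (hh n)^2 \<partial>M)"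
      unfolding u_def using cosI[of "hh n"]
      by (intro nn_integral_eq_integral) (auto intro!: integrable_divide Bochner_Integration.integrable_diff)
    also have "\<dots> \<le> ennreal B" using Eb[OF hh(1) hh(2)] by (rule ennreal_leI)
    finally show ?thesis .
  qed
  have pw: "ennreal ((D x)^2) \<le> liminf (\<lambda>n. u n x)" for x
  proof -
    have low: "ennreal ((D x)^2 - (hh n)^2 * (D x)^4 / 12) \<le> u n x" for n
    proof -
      have "(hh n * D x)^2/2 - (hh n * D x)^4/24 \<le> 1 - cos (hh n * D x)" by (rule cos_taylor3)
      then have "2 * ((hh n * D x)^2/2 - (hh n * D x)^4/24) / (hh n)^2 \<le> 2 * (1 - cos (hh n * D x)) / (hh n)^2"
        using hh[of n] by (intro divide_right_mono mult_left_mono) auto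
      moreover have "2 * ((hh n * D x)^2/2 - (hh n * D x)^4/24) / (hh n)^2 = (D x)^2 - (hh n)^2 * (D x)^4 / 12"
        using hh[of n] by (simp add: field_simps power2_eq_square power4_eq_xxxx)
      ultimately show ?thesis unfolding u_def by (intro ennreal_leI) simp
    qed
    have "(\<lambda>n. (D x)^2 - (hh n)^2 * (D x)^4 / 12) \<longlonglongrightarrow> (D x)^2 - 0^2 * (D x)^4 / 12"
      by (intro tendsto_intros hh0) simp
    then have "(\<lambda>n. ennreal ((D x)^2 - (hh n)^2 * (D x)^4 / 12)) \<longlonglongrightarrow> ennreal ((D x)^2)"
      by (intro tendsto_ennrealI) simp
    then have "ennreal ((D x)^2) = liminf (\<lambda>n. ennreal ((D x)^2 - (hh n)^2 * (D x)^4 / 12))"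
      by (simp add: lim_imp_Liminf)
    also have "\<dots> \<le> liminf (\<lambda>n. u n x)" by (intro Liminf_mono) (use low in auto)
    finally show ?thesis .
  qed
  have nnD: "(\<integral>\<^sup>+x. ennreal ((D x)^2) \<partial>M) \<le> ennreal B"
  proof -
    have "(\<integral>\<^sup>+x. ennreal ((D x)^2) \<partial>M) \<le> (\<integral>\<^sup>+x. liminf (\<lambda>n. u n x) \<partial>M)"
      by (intro nn_integral_mono pw)
    also have "\<dots> \<le> liminf (\<lambda>n. integral\<^sup>N M (u n))" by (rule nn_integral_liminf[OF um])
    also have "\<dots> \<le> ennreal B" by (rule order_trans[OF Liminf_le_Limsup Limsup_bounded]) (auto intro: always_eventually ui)
    finally show ?thesis .
  qed
  have D2I: "integrable M (\<lambda>x. (D x)^2)"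
    using Dm le_less_trans[OF nnD ennreal_less_top] by (intro integrableI_bounded) auto
  have D2b: "(\<integral>x. (D x)^2 \<partial>M) \<le> B"
  proof -
    have "(\<integral>x. (D x)^2 \<partial>M) = enn2real (\<integral>\<^sup>+x. ennreal ((D x)^2) \<partial>M)"
      by (rule integral_eq_nn_integral) (use Dm in auto)
    also have "\<dots> \<le> B"
      using enn2real_mono[OF nnD ennreal_less_top] B0 by simp
    finally show ?thesis .
  qed
  have DI: "integrable M D" by (rule finite_measure.square_integrable_imp_integrable[OF _ Dm D2I]) unfold_locales
  have mb: "\<bar>\<integral>x. D x \<partial>M\<bar> \<le> \<Delta>*C + hh n * B / 2" for n
  proof -
    define h where "h = hh n"
    have h: "0 < h" "h \<le> 1" using hh h_def by auto
    have pt: "\<bar>D x - sin (h * D x) / h\<bar> \<le> h * (D x)^2 / 2" for x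
    proof -
      have "\<bar>sin (h * D x) - h * D x\<bar> \<le> (h * D x)^2/2" by (rule cos_sin_taylor1(2))
      then have "\<bar>sin (h * D x) - h * D x\<bar> / h \<le> (h * D x)^2/2 / h" using h by (intro divide_right_mono) auto
      moreover have "D x - sin (h * D x) / h = (h * D x - sin (h * D x)) / h"
        using h by (simp add: field_simps)
      then have "\<bar>sin (h * D x) - h * D x\<bar> / h = \<bar>D x - sin (h * D x) / h\<bar>"
        using h by (simp add: abs_divide abs_minus_commute)
      moreover have "(h * D x)^2/2 / h = h * (D x)^2 / 2" using h by (simp add: field_simps power2_eq_square)
      ultimately show ?thesis by simp
    qed
    have "\<bar>(\<integral>x. D x \<partial>M) - (\<integral>x. sin (h * D x) / h \<partial>M)\<bar> = \<bar>\<integral>x. D x - sin (h * D x) / h \<partial>M\<bar>"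
      using DI sinI[of h] by (subst Bochner_Integration.integral_diff) auto
    also have "\<dots> \<le> (\<integral>x. \<bar>D x - sin (h * D x) / h\<bar> \<partial>M)" by (rule integral_abs_bound)
    also have "\<dots> \<le> (\<integral>x. h * (D x)^2 / 2 \<partial>M)"
      using DI sinI[of h] D2I pt by (intro integral_mono) auto
    also have "\<dots> = h * (\<integral>x. (D x)^2 \<partial>M) / 2" by simp
    also have "\<dots> \<le> h * B / 2" using D2b h by (intro divide_right_mono mult_left_mono) auto
    finally have 1: "\<bar>(\<integral>x. D x \<partial>M) - (\<integral>x. sin (h * D x) / h \<partial>M)\<bar> \<le> h * B / 2" .
    have "\<bar>\<integral>x. sin (h * D x) / h \<partial>M\<bar> = \<bar>Im (char (distr M borel D) h)\<bar> / h"
      using h by (simp add: sinE[symmetric])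
    also have "\<dots> \<le> \<Delta>*C*h / h" using bndi[OF h] h by (intro divide_right_mono) auto
    also have "\<dots> = \<Delta>*C" using h by simp
    finally have "\<bar>\<integral>x. D x \<partial>M\<bar> \<le> \<Delta>*C + h * B / 2" using 1 by linarith
    then show ?thesis unfolding h_def .
  qed
  have "(\<lambda>n. \<Delta>*C + hh n * B / 2) \<longlonglongrightarrow> \<Delta>*C + 0 * B / 2" by (intro tendsto_intros hh0) simp
  then have "\<bar>\<integral>x. D x \<partial>M\<bar> \<le> \<Delta>*C"
    by (intro LIMSEQ_le_const[where X="\<lambda>n. \<Delta>*C + hh n * B / 2"]) (use mb in auto)
  then show ?thesis using D2I D2b B_def by simp
qed


definition nat_gen where
  "nat_gen M X s = {X r -` B \<inter> space M | r B. 0 \<le> r \<and> r \<le> s \<and> B \<in> sets borel}"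

lemma nat_gen_Pow: "nat_gen M X s \<subseteq> Pow (space M)" unfolding nat_gen_def by auto

lemma space_natural_sigma[simp]: "space (natural_sigma M X s) = space M"
  unfolding natural_sigma_def using nat_gen_Pow[of M X s] by (simp add: nat_gen_def space_measure_of_conv)

lemma sets_natural_sigma: "sets (natural_sigma M X s) = sigma_sets (space M) (nat_gen M X s)"
  unfolding natural_sigma_def using nat_gen_Pow[of M X s] by (simp add: nat_gen_def)

lemma natural_sigma_sub:
  assumes "\<And>r. 0 \<le> r \<Longrightarrow> r \<le> s \<Longrightarrow> X r \<in> borel_measurable M"
  shows "sets (natural_sigma M X s) \<subseteq> sets M"
  unfolding sets_natural_sigma
proof (rule sets.sigma_sets_subset)
  show "nat_gen M X s \<subseteq> sets M" unfolding nat_gen_def using assms by (auto intro: measurable_sets)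
qed

lemma natural_sigma_mono:
  assumes "s \<le> s'" shows "sets (natural_sigma M X s) \<subseteq> sets (natural_sigma M X s')"
  unfolding sets_natural_sigma
  by (rule sigma_sets_mono') (use assms in \<open>fastforce simp: nat_gen_def\<close>)

lemma X_natural_meas:
  assumes "0 \<le> r" "r \<le> s" shows "X r \<in> borel_measurable (natural_sigma M X s)"
proof (rule measurableI)
  fix A :: "real set" assume "A \<in> sets borel"
  then have "X r -` A \<inter> space M \<in> nat_gen M X s" using assms unfolding nat_gen_def by auto
  then show "X r -` A \<inter> space (natural_sigma M X s) \<in> sets (natural_sigma M X s)"
    unfolding sets_natural_sigma by auto
qed auto

lemma meas_sets_mono:
  assumes "f \<in> borel_measurable N1" "space N1 = space N2" "sets N1 \<subseteq> sets N2"
  shows "f \<in> borel_measurable N2"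
  using assms by (auto simp: measurable_def)

lemma levy_facts:
  assumes "levy_process M X \<psi>"
  shows "prob_space M" "\<And>t. 0 \<le> t \<Longrightarrow> X t \<in> borel_measurable M" "AE \<omega> in M. X 0 \<omega> = 0"
    "\<And>n tt. 0 \<le> tt 0 \<Longrightarrow> (\<forall>i<n. tt i \<le> tt (Suc i)) \<Longrightarrow>
        prob_space.indep_vars M (\<lambda>_. borel) (\<lambda>i \<omega>. X (tt (Suc i)) \<omega> - X (tt i) \<omega>) {..<n}"
    "\<And>s t u. 0 \<le> s \<Longrightarrow> s \<le> t \<Longrightarrow>
        char (distr M borel (\<lambda>\<omega>. X t \<omega> - X s \<omega>)) u = exp (complex_of_real (t - s) * \<psi> u)"
  using assms unfolding levy_process_def by auto

lemma levy_event_indep: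
  assumes L: "levy_process M X \<psi>" and s: "0 \<le> s" "s \<le> t"
    and R: "finite R" "R \<subseteq> {0..s}" and B: "\<And>r. r \<in> R \<Longrightarrow> B r \<in> sets borel"
    and A0: "A0 \<in> sets borel"
  shows "measure M ({\<omega>\<in>space M. \<forall>r\<in>R. X r \<omega> \<in> B r} \<inter> ((\<lambda>\<omega>. X t \<omega> - X s \<omega>) -` A0 \<inter> space M))
       = measure M {\<omega>\<in>space M. \<forall>r\<in>R. X r \<omega> \<in> B r} * measure M ((\<lambda>\<omega>. X t \<omega> - X s \<omega>) -` A0 \<inter> space M)"
proof -
  interpret prob_space M using levy_facts(1)[OF L] .
  note Xm = levy_facts(2)[OF L]
  define E where "E = {\<omega>\<in>space M. \<forall>r\<in>R. X r \<omega> \<in> B r}"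
  define A where "A = (\<lambda>\<omega>. X t \<omega> - X s \<omega>) -` A0 \<inter> space M"
  define S where "S = insert 0 R"
  define Lst where "Lst = sorted_list_of_set S"
  define N where "N = length Lst"
  have finS: "finite S" using R S_def by simp
  have setL: "set Lst = S" using finS Lst_def by simp
  have sortL: "sorted Lst" using Lst_def by simp
  have S0: "\<And>x. x \<in> S \<Longrightarrow> 0 \<le> x \<and> x \<le> s" using R s S_def by auto
  have Npos: "0 < N" using setL N_def S_def by (cases Lst) auto
  define tt where "tt j = (if j < N then Lst ! j else if j = N then s else t)" for j
  have tt0: "tt 0 = 0"
  proof -
    have "0 \<in> set Lst" using setL S_def by auto
    then obtain k where k: "k < N" "Lst ! k = 0" by (auto simp: in_set_conv_nth N_def)
    have "Lst ! 0 \<le> Lst ! k" using sortL k by (intro sorted_nth_mono) (auto simp: N_def)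
    moreover have "0 \<le> Lst ! 0" using S0 setL Npos N_def nth_mem by blast
    ultimately show ?thesis using k Npos tt_def by simp
  qed
  have ttm: "tt i \<le> tt (Suc i)" for i
  proof -
    have "Lst ! i \<le> s" if "i < N" using S0 setL that N_def nth_mem by blast
    then show ?thesis using sortL s unfolding tt_def by (auto simp: N_def intro!: sorted_nth_mono)
  qed
  have "\<forall>r\<in>R. \<exists>j. j < N \<and> tt j = r"
  proof
    fix r assume "r \<in> R"
    then have "r \<in> set Lst" using setL S_def by auto
    then obtain j where "j < N" "Lst ! j = r" by (auto simp: in_set_conv_nth N_def)
    then show "\<exists>j. j < N \<and> tt j = r" using tt_def by auto
  qed
  then obtain idx where idx: "\<And>r. r \<in> R \<Longrightarrow> idx r < N \<and> tt (idx r) = r" by metis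
  define I where "I i \<omega> = X (tt (Suc i)) \<omega> - X (tt i) \<omega>" for i \<omega>
  have IND: "indep_vars (\<lambda>_. borel) I {..<Suc N}"
    unfolding I_def by (rule levy_facts(4)[OF L]) (use tt0 ttm in auto)
  have tt_nonneg: "0 \<le> tt j" for j
  proof (induction j)
    case (Suc j) then show ?case using ttm[of j] by linarith
  qed (simp add: tt0)
  have Im: "I i \<in> borel_measurable M" for i unfolding I_def using Xm tt_nonneg by measurable
  have IN: "I N = (\<lambda>\<omega>. X t \<omega> - X s \<omega>)" unfolding I_def tt_def by simp
  have tele: "X (tt j) \<omega> = X (tt 0) \<omega> + (\<Sum>i<j. I i \<omega>)" for j \<omega>
    unfolding I_def by (subst sum_lessThan_telescope[where f="\<lambda>i. X (tt i) \<omega>"]) simp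
  define E' where "E' = {\<omega>\<in>space M. \<forall>r\<in>R. (\<Sum>i<idx r. I i \<omega>) \<in> B r}"
  have AEq: "AE \<omega> in M. (\<omega> \<in> E) = (\<omega> \<in> E')"
    using levy_facts(3)[OF L]
  proof eventually_elim
    case (elim \<omega>)
    have "X r \<omega> = (\<Sum>i<idx r. I i \<omega>)" if "r \<in> R" for r
      using tele[of "idx r" \<omega>] idx[OF that] tt0 elim by simp
    then show ?case unfolding E_def E'_def by auto
  qed
  define Ei where "Ei i = {I i -` A \<inter> space M | A. A \<in> sets borel}" for i
  have indE: "indep_sets Ei {..<Suc N}" using IND unfolding indep_vars_def2 Ei_def by simp
  define J where "J = case_bool {..<N} {N}"
  have UJ: "(\<Union>j\<in>UNIV. J j) = {..<Suc N}" unfolding J_def UNIV_bool by auto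
  have col: "indep_sets (\<lambda>j. sigma_sets (space M) (\<Union>i\<in>J j. Ei i)) UNIV"
  proof (rule indep_sets_collect_sigma)
    show "indep_sets Ei (\<Union>j\<in>UNIV. J j)" using indE UJ by simp
    show "Int_stable (Ei i)" for i
      unfolding Ei_def Int_stable_def
    proof safe
      fix C D :: "real set" assume "C \<in> sets borel" "D \<in> sets borel"
      then show "\<exists>F. I i -` C \<inter> space M \<inter> (I i -` D \<inter> space M) = I i -` F \<inter> space M \<and> F \<in> sets borel"
        by (intro exI[of _ "C \<inter> D"]) auto
    qed
    show "disjoint_family_on J UNIV" unfolding J_def disjoint_family_on_def by (auto split: bool.split)
  qed
  define N0 where "N0 = sigma (space M) (\<Union>i\<in>J True. Ei i)"
  have EiP: "(\<Union>i\<in>J True. Ei i) \<subseteq> Pow (space M)" unfolding Ei_def by auto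
  have spN0: "space N0 = space M" unfolding N0_def using EiP by simp
  have setsN0: "sets N0 = sigma_sets (space M) (\<Union>i\<in>J True. Ei i)" unfolding N0_def using EiP by simp
  have IN0: "I i \<in> borel_measurable N0" if "i < N" for i
  proof (rule measurableI)
    fix A :: "real set" assume "A \<in> sets borel"
    then have "I i -` A \<inter> space M \<in> (\<Union>i\<in>J True. Ei i)" using that unfolding Ei_def J_def by auto
    then show "I i -` A \<inter> space N0 \<in> sets N0" unfolding setsN0 spN0 by auto
  qed auto
  have sumN0: "(\<lambda>\<omega>. \<Sum>i<idx r. I i \<omega>) \<in> borel_measurable N0" if "r \<in> R" for r
    by (rule borel_measurable_sum) (use IN0 idx[OF that] in auto)
  have E'N0: "E' \<in> sigma_sets (space M) (\<Union>i\<in>J True. Ei i)"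
  proof -
    have "{\<omega>\<in>space N0. \<forall>r\<in>R. (\<Sum>i<idx r. I i \<omega>) \<in> B r} \<in> sets N0"
      by (rule sets.sets_Collect_finite_All[OF _ R(1)])
         (use sumN0 B in \<open>auto intro: measurable_sets_Collect\<close>)
    then show ?thesis unfolding E'_def setsN0 spN0 .
  qed
  have AN: "A \<in> sigma_sets (space M) (\<Union>i\<in>J False. Ei i)"
    unfolding A_def J_def Ei_def using A0 IN by auto
  have "prob (\<Inter>j\<in>UNIV. case_bool E' A j) = (\<Prod>j\<in>UNIV. prob (case_bool E' A j))"
    by (rule indep_setsD[OF col]) (use E'N0 AN in \<open>auto split: bool.split\<close>)
  then have indp: "prob (E' \<inter> A) = prob E' * prob A" by (simp add: UNIV_bool Int_commute)
  have EM: "E \<in> events" unfolding E_def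
    by (rule sets.sets_Collect_finite_All[OF _ R(1)]) (use Xm R B in \<open>auto intro: measurable_sets_Collect\<close>)
  have E'M: "E' \<in> events" unfolding E'_def
    by (rule sets.sets_Collect_finite_All[OF _ R(1)]) (use Im B in \<open>auto intro: measurable_sets_Collect\<close>)
  have "X t \<in> borel_measurable M" "X s \<in> borel_measurable M" using Xm s by auto
  then have AM: "A \<in> events" unfolding A_def using A0 by measurable
  have "prob (E \<inter> A) = prob (E' \<inter> A)"
    by (rule measure_eq_AE) (use AEq EM E'M AM in auto)
  moreover have "prob E = prob E'" by (rule measure_eq_AE) (use AEq EM E'M in auto)
  ultimately show ?thesis using indp unfolding E_def A_def by simp
qed

lemma levy_indep_var:
  assumes L: "levy_process M X \<psi>" and s: "0 \<le> s" "s \<le> t"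
    and Z: "Z \<in> borel_measurable (natural_sigma M X s)"
  shows "prob_space.indep_var M borel Z borel (\<lambda>\<omega>. X t \<omega> - X s \<omega>)"
proof -
  interpret prob_space M using levy_facts(1)[OF L] .
  note Xm = levy_facts(2)[OF L]
  define P where "P = {{\<omega>\<in>space M. \<forall>r\<in>R. X r \<omega> \<in> B r} | R B. finite R \<and> R \<subseteq> {0..s} \<and> (\<forall>r\<in>R. B r \<in> sets borel)}"
  define G where "G = {(\<lambda>\<omega>. X t \<omega> - X s \<omega>) -` A \<inter> space M | A. A \<in> sets borel}"
  have Xts: "X t \<in> borel_measurable M" "X s \<in> borel_measurable M" using Xm s by auto
  have Dm: "(\<lambda>\<omega>. X t \<omega> - X s \<omega>) \<in> borel_measurable M" using Xts by measurable
  have Pev: "P \<subseteq> events"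
  proof
    fix E assume "E \<in> P"
    then obtain R B where E: "E = {\<omega>\<in>space M. \<forall>r\<in>R. X r \<omega> \<in> B r}" and R: "finite R" "R \<subseteq> {0..s}"
      and B: "\<forall>r\<in>R. B r \<in> sets borel" unfolding P_def by auto
    show "E \<in> events" unfolding E
      by (rule sets.sets_Collect_finite_All[OF _ R(1)]) (use Xm R B in \<open>auto intro: measurable_sets_Collect\<close>)
  qed
  have Gev: "G \<subseteq> events" unfolding G_def using Dm by auto
  have PInt: "Int_stable P"
    unfolding Int_stable_def
  proof safe
    fix a b assume "a \<in> P" "b \<in> P"
    then obtain R1 B1 R2 B2 where a: "a = {\<omega>\<in>space M. \<forall>r\<in>R1. X r \<omega> \<in> B1 r}" and R1: "finite R1" "R1 \<subseteq> {0..s}"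
      and B1: "\<forall>r\<in>R1. B1 r \<in> sets borel"
      and b: "b = {\<omega>\<in>space M. \<forall>r\<in>R2. X r \<omega> \<in> B2 r}" and R2: "finite R2" "R2 \<subseteq> {0..s}"
      and B2: "\<forall>r\<in>R2. B2 r \<in> sets borel" unfolding P_def by blast
    define B where "B r = (if r \<in> R1 then B1 r else UNIV) \<inter> (if r \<in> R2 then B2 r else UNIV)" for r
    have "a \<inter> b = {\<omega>\<in>space M. \<forall>r\<in>R1 \<union> R2. X r \<omega> \<in> B r}" unfolding a b B_def by auto
    moreover have "\<forall>r\<in>R1 \<union> R2. B r \<in> sets borel" unfolding B_def using B1 B2 by auto
    ultimately show "a \<inter> b \<in> P" unfolding P_def using R1 R2 by blast
  qed
  have GInt: "Int_stable G"
    unfolding Int_stable_def G_def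
  proof safe
    fix C D :: "real set" assume "C \<in> sets borel" "D \<in> sets borel"
    then show "\<exists>F. (\<lambda>\<omega>. X t \<omega> - X s \<omega>) -` C \<inter> space M \<inter> ((\<lambda>\<omega>. X t \<omega> - X s \<omega>) -` D \<inter> space M)
         = (\<lambda>\<omega>. X t \<omega> - X s \<omega>) -` F \<inter> space M \<and> F \<in> sets borel"
      by (intro exI[of _ "C \<inter> D"]) auto
  qed
  have "indep_set P G"
    unfolding indep_sets2_eq
  proof (intro conjI Pev Gev ballI)
    fix a b assume "a \<in> P" "b \<in> G"
    then obtain R B A0 where a: "a = {\<omega>\<in>space M. \<forall>r\<in>R. X r \<omega> \<in> B r}" and R: "finite R" "R \<subseteq> {0..s}"
      and B: "\<forall>r\<in>R. B r \<in> sets borel" and b: "b = (\<lambda>\<omega>. X t \<omega> - X s \<omega>) -` A0 \<inter> space M"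
      and A0: "A0 \<in> sets borel" unfolding P_def G_def by blast
    show "prob (a \<inter> b) = prob a * prob b" unfolding a b
      by (rule levy_event_indep[OF L s R _ A0]) (use B in auto)
  qed
  from indep_set_sigma_sets[OF this PInt GInt]
  have ind2: "indep_set (sigma_sets (space M) P) (sigma_sets (space M) G)" .
  have natP: "sets (natural_sigma M X s) \<subseteq> sigma_sets (space M) P"
    unfolding sets_natural_sigma
  proof (rule sigma_sets_mono')
    show "nat_gen M X s \<subseteq> P"
    proof
      fix E assume "E \<in> nat_gen M X s"
      then obtain r B where E: "E = X r -` B \<inter> space M" "0 \<le> r" "r \<le> s" "B \<in> sets borel"
        unfolding nat_gen_def by blast
      have "E = {\<omega>\<in>space M. \<forall>r'\<in>{r}. X r' \<omega> \<in> (\<lambda>_. B) r'}" using E by auto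
      moreover have "finite {r} \<and> {r} \<subseteq> {0..s} \<and> (\<forall>r'\<in>{r}. (\<lambda>_. B) r' \<in> sets borel)" using E by auto
      ultimately show "E \<in> P" unfolding P_def by (intro CollectI exI[of _ "{r}"] exI[of _ "\<lambda>_. B"]) (rule conjI)
    qed
  qed
  have Zsets: "sigma_sets (space M) {Z -` A \<inter> space M | A. A \<in> sets borel} \<subseteq> sets (natural_sigma M X s)"
  proof (rule sets.sigma_sets_subset'[where M="natural_sigma M X s"])
    show "{Z -` A \<inter> space M | A. A \<in> sets borel} \<subseteq> sets (natural_sigma M X s)"
      using Z by (auto dest: measurable_sets)
  qed (use sets.top[of "natural_sigma M X s"] in simp)
  have ZM: "Z \<in> borel_measurable M"
    by (rule meas_sets_mono[OF Z]) (auto intro!: natural_sigma_sub Xm)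
  show ?thesis
    unfolding indep_var_eq
  proof (intro conjI ZM Dm)
    show "indep_set (sigma_sets (space M) {Z -` A \<inter> space M |A. A \<in> sets borel})
        (sigma_sets (space M) {(\<lambda>\<omega>. X t \<omega> - X s \<omega>) -` A \<inter> space M |A. A \<in> sets borel})"
      using ind2 unfolding indep_set_def G_def
      by (rule indep_sets_mono_sets) (use Zsets natP in \<open>auto split: bool.split\<close>)
  qed
qed



lemma tt_mono_le:
  assumes "\<forall>i\<le>m. tt i \<le> (tt (Suc i) :: real)" "i \<le> k" "k \<le> Suc m"
  shows "tt i \<le> tt k"
  using assms(2,3)
proof (induction k)
  case (Suc k)
  then show ?case using assms(1) by (cases "i = Suc k") (auto intro: order_trans[of _ "tt k"])
qed simp

lemma mart_L2:
  fixes M :: "'a measure" and X :: "real \<Rightarrow> 'a \<Rightarrow> real"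
  assumes L: "levy_process M X \<psi>"
   and mom: "\<And>s t. 0 \<le> s \<Longrightarrow> s \<le> t \<Longrightarrow> integrable M (\<lambda>\<omega>. (X t \<omega> - X s \<omega>)^2) \<and>
             (\<integral>\<omega>. (X t \<omega> - X s \<omega>)^2 \<partial>M) \<le> (t-s)*V + ((t-s)*C)^2"
   and tt0: "tt 0 = 0" and ttm: "\<forall>i\<le>m. tt i \<le> tt (Suc i)"
   and Gm: "\<And>i. i \<le> m \<Longrightarrow> G i \<in> borel_measurable (natural_sigma M X (tt i))"
   and Gb: "\<And>i \<omega>. i \<le> m \<Longrightarrow> \<omega> \<in> space M \<Longrightarrow> \<bar>G i \<omega>\<bar> \<le> 1"
  defines "c i \<equiv> \<integral>\<omega>. X (tt (Suc i)) \<omega> - X (tt i) \<omega> \<partial>M"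
  defines "S j \<omega> \<equiv> \<Sum>i\<in>{1..j}. G i \<omega> * (X (tt (Suc i)) \<omega> - X (tt i) \<omega> - c i)"
  shows "j \<le> m \<Longrightarrow> integrable M (\<lambda>\<omega>. (S j \<omega>)^2) \<and>
      (\<integral>\<omega>. (S j \<omega>)^2 \<partial>M) \<le> (\<Sum>i\<in>{1..j}. (tt (Suc i) - tt i)*V + ((tt (Suc i) - tt i)*C)^2)"
proof -
  interpret prob_space M using levy_facts(1)[OF L] .
  note Xm = levy_facts(2)[OF L]
  have tle: "\<And>i k. i \<le> k \<Longrightarrow> k \<le> Suc m \<Longrightarrow> tt i \<le> tt k" using tt_mono_le[OF ttm] by blast
  have ttnn: "\<And>i. i \<le> Suc m \<Longrightarrow> 0 \<le> tt i" using tle[of 0] tt0 by auto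
  have natM: "\<And>s. sets (natural_sigma M X s) \<subseteq> sets M"
    by (rule natural_sigma_sub) (use Xm in auto)
  have Sm: "S j \<in> borel_measurable (natural_sigma M X (tt (Suc j)))" if "j \<le> m" for j
    unfolding S_def
  proof (rule borel_measurable_sum, rule borel_measurable_times)
    fix i assume i: "i \<in> {1..j}"
    show "G i \<in> borel_measurable (natural_sigma M X (tt (Suc j)))"
      by (rule meas_sets_mono[OF Gm]) (use i that in \<open>auto intro!: natural_sigma_mono tle\<close>)
    have "X (tt (Suc i)) \<in> borel_measurable (natural_sigma M X (tt (Suc j)))"
      by (rule X_natural_meas) (use i that in \<open>auto intro!: ttnn tle\<close>)
    moreover have "X (tt i) \<in> borel_measurable (natural_sigma M X (tt (Suc j)))"
      by (rule X_natural_meas) (use i that in \<open>auto intro!: ttnn tle\<close>)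
    ultimately show "(\<lambda>\<omega>. X (tt (Suc i)) \<omega> - X (tt i) \<omega> - c i) \<in> borel_measurable (natural_sigma M X (tt (Suc j)))"
      by measurable
  qed
  have SM: "S j \<in> borel_measurable M" if "j \<le> m" for j
    by (rule meas_sets_mono[OF Sm[OF that]]) (use natM in auto)
  show "j \<le> m \<Longrightarrow> ?thesis"
  proof (induction j)
    case 0 then show ?case unfolding S_def by simp
  next
    case (Suc j)
    define k where "k = Suc j"
    have k: "k \<le> m" "1 \<le> k" using Suc k_def by auto
    define \<Delta> where "\<Delta> \<omega> = X (tt (Suc k)) \<omega> - X (tt k) \<omega>" for \<omega>
    define Dc where "Dc \<omega> = \<Delta> \<omega> - c k" for \<omega>
    define W where "W \<omega> = G k \<omega> * Dc \<omega>" for \<omega>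
    define Q where "Q \<omega> = S j \<omega> * G k \<omega>" for \<omega>
    have tk: "0 \<le> tt k" "tt k \<le> tt (Suc k)" using ttnn tle k by auto
    have \<Delta>m: "\<Delta> \<in> borel_measurable M" unfolding \<Delta>_def using Xm tk by (intro borel_measurable_diff) auto
    have \<Delta>2: "integrable M (\<lambda>\<omega>. (\<Delta> \<omega>)^2)" "(\<integral>\<omega>. (\<Delta> \<omega>)^2 \<partial>M) \<le> (tt (Suc k) - tt k)*V + ((tt (Suc k) - tt k)*C)^2"
      using mom[OF tk] unfolding \<Delta>_def by auto
    have \<Delta>I: "integrable M \<Delta>" using square_integrable_imp_integrable[OF \<Delta>m \<Delta>2(1)] .
    have ck: "c k = expectation \<Delta>" unfolding c_def \<Delta>_def ..
    have DcI: "integrable M Dc" unfolding Dc_def using \<Delta>I by auto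
    have Dc2I: "integrable M (\<lambda>\<omega>. (Dc \<omega>)^2)"
      unfolding Dc_def power2_diff using \<Delta>I \<Delta>2 by (intro Bochner_Integration.integrable_diff Bochner_Integration.integrable_add) auto
    have EDc: "expectation Dc = 0" unfolding Dc_def ck using \<Delta>I by (simp add: prob_space)
    have EDc2: "(\<integral>\<omega>. (Dc \<omega>)^2 \<partial>M) \<le> (\<integral>\<omega>. (\<Delta> \<omega>)^2 \<partial>M)"
      using variance_eq[OF \<Delta>I \<Delta>2(1)] unfolding Dc_def ck by simp
    have Gkm: "G k \<in> borel_measurable M" by (rule meas_sets_mono[OF Gm[OF k(1)]]) (use natM in auto)
    have SjM: "S j \<in> borel_measurable M" using SM Suc by auto
    have IH: "integrable M (\<lambda>\<omega>. (S j \<omega>)^2)"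
      "(\<integral>\<omega>. (S j \<omega>)^2 \<partial>M) \<le> (\<Sum>i\<in>{1..j}. (tt (Suc i) - tt i)*V + ((tt (Suc i) - tt i)*C)^2)"
      using Suc by auto
    have SjI: "integrable M (S j)" using square_integrable_imp_integrable[OF SjM IH(1)] .
    have QI: "integrable M Q" unfolding Q_def
      by (rule Bochner_Integration.integrable_bound[OF SjI]) (use Gkm SjM Gb[OF k(1)] in \<open>auto simp: abs_mult intro!: AE_I2 mult_left_le\<close>)
    have Qnat: "Q \<in> borel_measurable (natural_sigma M X (tt k))"
      unfolding Q_def using Sm[of j] Gm[OF k(1)] Suc k_def by (intro borel_measurable_times) auto
    have ind: "indep_var borel Q borel \<Delta>"
      unfolding \<Delta>_def by (rule levy_indep_var[OF L tk Qnat])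
    have ind2: "indep_var borel Q borel Dc"
      using indep_var_compose[OF ind, of "\<lambda>x. x" borel "\<lambda>x. x - c k" borel]
      unfolding Dc_def by (simp add: comp_def)
    have QDI: "integrable M (\<lambda>\<omega>. Q \<omega> * Dc \<omega>)" by (rule indep_var_integrable[OF ind2 QI DcI])
    have EQD: "(\<integral>\<omega>. Q \<omega> * Dc \<omega> \<partial>M) = 0" using indep_var_lebesgue_integral[OF ind2 QI DcI] EDc by simp
    have W2le: "(W \<omega>)^2 \<le> (Dc \<omega>)^2" if "\<omega> \<in> space M" for \<omega>
    proof -
      have "\<bar>G k \<omega>\<bar>^2 \<le> 1" using Gb[OF k(1) that] by (simp add: abs_square_le_1)
      then have "(G k \<omega>)^2 * (Dc \<omega>)^2 \<le> 1 * (Dc \<omega>)^2" by (intro mult_right_mono) auto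
      then show ?thesis unfolding W_def by (simp add: power_mult_distrib)
    qed
    have DcM: "Dc \<in> borel_measurable M" unfolding Dc_def using \<Delta>m by auto
    have W2I: "integrable M (\<lambda>\<omega>. (W \<omega>)^2)"
      by (rule Bochner_Integration.integrable_bound[OF Dc2I]) (use W2le Gkm DcM in \<open>auto simp: W_def intro!: AE_I2\<close>)
    have EW2: "(\<integral>\<omega>. (W \<omega>)^2 \<partial>M) \<le> (\<integral>\<omega>. (Dc \<omega>)^2 \<partial>M)"
      by (rule integral_mono_AE[OF W2I Dc2I]) (use W2le in \<open>auto intro!: AE_I2\<close>)
    have Sk: "S k \<omega> = S j \<omega> + W \<omega>" for \<omega> unfolding S_def W_def Dc_def \<Delta>_def k_def by simp
    have sq: "(S k \<omega>)^2 = (S j \<omega>)^2 + 2 * (Q \<omega> * Dc \<omega>) + (W \<omega>)^2" for \<omega>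
      unfolding Sk Q_def W_def by (simp add: power2_sum algebra_simps)
    have I3: "integrable M (\<lambda>\<omega>. (S j \<omega>)^2 + 2 * (Q \<omega> * Dc \<omega>) + (W \<omega>)^2)"
      using IH(1) QDI W2I by auto
    have "(\<integral>\<omega>. (S k \<omega>)^2 \<partial>M) = (\<integral>\<omega>. (S j \<omega>)^2 \<partial>M) + 2 * (\<integral>\<omega>. Q \<omega> * Dc \<omega> \<partial>M) + (\<integral>\<omega>. (W \<omega>)^2 \<partial>M)"
      unfolding sq using IH(1) QDI W2I by simp
    also have "\<dots> \<le> (\<Sum>i\<in>{1..j}. (tt (Suc i) - tt i)*V + ((tt (Suc i) - tt i)*C)^2) + 0 + ((tt (Suc k) - tt k)*V + ((tt (Suc k) - tt k)*C)^2)"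
      using IH(2) EQD EW2 EDc2 \<Delta>2(2) by linarith
    also have "\<dots> = (\<Sum>i\<in>{1..k}. (tt (Suc i) - tt i)*V + ((tt (Suc i) - tt i)*C)^2)"
      unfolding k_def by simp
    finally have E4: "(\<integral>\<omega>. (S k \<omega>)^2 \<partial>M) \<le> (\<Sum>i\<in>{1..k}. (tt (Suc i) - tt i)*V + ((tt (Suc i) - tt i)*C)^2)" .
    have I4: "integrable M (\<lambda>\<omega>. (S k \<omega>)^2)" unfolding sq by (rule I3)
    show ?case using I4 E4 unfolding k_def by (rule conjI)
  qed
qed



lemma aux_lin: "(K::real) < y \<Longrightarrow> \<not> (K-C)/2 \<le> b \<Longrightarrow> y \<le> a + b + c \<Longrightarrow> c \<le> C \<Longrightarrow> (K-C)/2 \<le> a"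
  by argo

lemma cheb2:
  assumes P: "prob_space M" and Zm: "Z \<in> borel_measurable M" and ZI: "integrable M (\<lambda>\<omega>. (Z \<omega>)^2)"
    and ZB: "(\<integral>\<omega>. (Z \<omega>)^2 \<partial>M) \<le> B" and a: "0 < a"
  shows "measure M {\<omega>\<in>space M. a \<le> \<bar>Z \<omega>\<bar>} \<le> B / a^2"
proof -
  have "{\<omega>\<in>space M. a \<le> \<bar>Z \<omega>\<bar>} = {\<omega>\<in>space M. a^2 \<le> (Z \<omega>)^2}"
    using a by (auto simp: abs_le_square_iff[symmetric] abs_of_pos)
  also have "measure M \<dots> \<le> (\<integral>\<omega>. (Z \<omega>)^2 \<partial>M) / a^2"
    by (rule integral_Markov_inequality_measure[OF ZI, where A="space M"]) (use a in auto)
  also have "\<dots> \<le> B / a^2" using ZB a by (intro divide_right_mono) auto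
  finally show ?thesis .
qed

lemma completion_measure_AE:
  assumes "AE x in M. (x \<in> A) = (x \<in> A')" "A' \<in> sets M" "A \<subseteq> space M"
  shows "measure (completion M) A = measure M A'"
proof -
  from assms(1) obtain N where N: "N \<in> null_sets M" "{x\<in>space M. \<not> ((x \<in> A) = (x \<in> A'))} \<subseteq> N"
    by (auto elim!: AE_E)
  have A'sp: "A' \<subseteq> space M" using assms(2) sets.sets_into_space by blast
  have "A = (A' - N) \<union> (A \<inter> N)" using N A'sp assms(3) by blast
  then have Ac: "A \<in> sets (completion M)"
    by (rule sets_completionI[where N'=N]) (use N assms(2) in auto)
  have "measure (completion M) A = measure (completion M) A'"
    by (rule measure_eq_AE[OF AE_completion[OF assms(1)] Ac]) (use assms(2) in auto)
  then show ?thesis using assms(2) by simp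
qed

lemma UT_single:
  fixes M :: "'a measure" and X :: "real \<Rightarrow> 'a \<Rightarrow> real"
  assumes L: "levy_process M X \<psi>" and V0: "0 \<le> V" and C0: "0 \<le> C"
    and re: "\<And>h. 0 < h \<Longrightarrow> h \<le> 1 \<Longrightarrow> - V * h^2 / 2 \<le> Re (\<psi> h)"
    and im: "\<And>h. 0 < h \<Longrightarrow> h \<le> 1 \<Longrightarrow> \<bar>Im (\<psi> h)\<bar> \<le> C * h"
    and t: "0 < t" "t \<le> 1" and Y: "Y \<in> simple_integrals M X t" and K: "C < K"
  shows "measure (completion M) {\<omega>\<in>space M. \<bar>Y \<omega>\<bar> > K} \<le> 8 * (V + C^2) / (K - C)^2"
proof -
  interpret prob_space M using levy_facts(1)[OF L] .
  note Xm = levy_facts(2)[OF L]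
  have mom: "integrable M (\<lambda>\<omega>. (X b \<omega> - X a \<omega>)^2) \<and>
             (\<integral>\<omega>. (X b \<omega> - X a \<omega>)^2 \<partial>M) \<le> (b-a)*V + ((b-a)*C)^2 \<and>
             \<bar>\<integral>\<omega>. X b \<omega> - X a \<omega> \<partial>M\<bar> \<le> (b-a)*C" if ab: "0 \<le> a" "a \<le> b" for a b
  proof (rule moment_bounds[where \<psi>=\<psi>])
    show "prob_space M" by unfold_locales
    show "(\<lambda>\<omega>. X b \<omega> - X a \<omega>) \<in> borel_measurable M" using Xm ab by (intro borel_measurable_diff) auto
    show "char (distr M borel (\<lambda>\<omega>. X b \<omega> - X a \<omega>)) u = exp (complex_of_real (b - a) * \<psi> u)" for u
      by (rule levy_facts(5)[OF L ab])
  qed (use ab V0 re im in auto)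
  from Y obtain m tt H where Ydef: "Y = (\<lambda>\<omega>. H 0 \<omega> * (X t \<omega> - X 0 \<omega>)
            + (\<Sum>i\<in>{1..m}. H i \<omega> * (X (tt (Suc i)) \<omega> - X (tt i) \<omega>)))"
    and tt0: "tt 0 = 0" and ttm1: "tt (Suc m) = t" and ttm: "\<forall>i\<le>m. tt i \<le> tt (Suc i)"
    and Hc: "\<forall>i\<le>m. completed_natural_measurable M X (tt i) (H i) \<and> (\<forall>\<omega>\<in>space M. \<bar>H i \<omega>\<bar> \<le> 1)"
    unfolding simple_integrals_def by blast
  have "\<forall>i\<in>{..m}. \<exists>G. G \<in> borel_measurable (natural_sigma M X (tt i)) \<and> (AE \<omega> in M. H i \<omega> = G \<omega>)"
    using Hc unfolding completed_natural_measurable_def by auto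
  then obtain G where G: "\<And>i. i \<le> m \<Longrightarrow> G i \<in> borel_measurable (natural_sigma M X (tt i))"
    "\<And>i. i \<le> m \<Longrightarrow> AE \<omega> in M. H i \<omega> = G i \<omega>" by (metis atMost_iff)
  define Gc where "Gc i \<omega> = max (-1) (min 1 (G i \<omega>))" for i \<omega>
  have Gcm: "Gc i \<in> borel_measurable (natural_sigma M X (tt i))" if "i \<le> m" for i
    unfolding Gc_def using G(1)[OF that] by measurable
  have Gcb: "\<bar>Gc i \<omega>\<bar> \<le> 1" for i \<omega> unfolding Gc_def by auto
  have HG: "AE \<omega> in M. H i \<omega> = Gc i \<omega>" if "i \<le> m" for i
    using G(2)[OF that]
  proof (rule AE_mp, intro AE_I2 impI)
    fix \<omega> assume "\<omega> \<in> space M" "H i \<omega> = G i \<omega>"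
    moreover have "\<bar>H i \<omega>\<bar> \<le> 1" using Hc that \<open>\<omega> \<in> space M\<close> by auto
    ultimately show "H i \<omega> = Gc i \<omega>" unfolding Gc_def by (auto simp: abs_le_iff max_def min_def)
  qed
  have tle: "\<And>i k. i \<le> k \<Longrightarrow> k \<le> Suc m \<Longrightarrow> tt i \<le> tt k" using tt_mono_le[OF ttm] by blast
  have ttnn: "\<And>i. i \<le> Suc m \<Longrightarrow> 0 \<le> tt i" using tle[of 0] tt0 by auto
  have natM: "\<And>s. sets (natural_sigma M X s) \<subseteq> sets M"
    by (rule natural_sigma_sub) (use Xm in auto)
  have GcM: "Gc i \<in> borel_measurable M" if "i \<le> m" for i
    by (rule meas_sets_mono[OF Gcm[OF that]]) (use natM in auto)
  define c where "c i = (\<integral>\<omega>. X (tt (Suc i)) \<omega> - X (tt i) \<omega> \<partial>M)" for i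
  define S where "S j \<omega> = (\<Sum>i\<in>{1..j}. Gc i \<omega> * (X (tt (Suc i)) \<omega> - X (tt i) \<omega> - c i))" for j \<omega>
  define Z0 where "Z0 \<omega> = Gc 0 \<omega> * (X t \<omega> - X 0 \<omega>)" for \<omega>
  define Y' where "Y' \<omega> = Z0 \<omega> + (\<Sum>i\<in>{1..m}. Gc i \<omega> * (X (tt (Suc i)) \<omega> - X (tt i) \<omega>))" for \<omega>
  have AEY: "AE \<omega> in M. Y \<omega> = Y' \<omega>"
  proof -
    have "AE \<omega> in M. \<forall>i\<in>{..m}. H i \<omega> = Gc i \<omega>" using HG by (subst AE_finite_all) auto
    then show ?thesis by eventually_elim (auto simp: Ydef Y'_def Z0_def)
  qed
  have L2: "integrable M (\<lambda>\<omega>. (S m \<omega>)^2) \<and>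
      (\<integral>\<omega>. (S m \<omega>)^2 \<partial>M) \<le> (\<Sum>i\<in>{1..m}. (tt (Suc i) - tt i)*V + ((tt (Suc i) - tt i)*C)^2)"
    unfolding S_def c_def
    by (rule mart_L2[OF L _ tt0 ttm Gcm]) (use mom Gcb in auto)
  have sumD: "(\<Sum>i\<in>{1..m}. tt (Suc i) - tt i) \<le> 1"
  proof -
    have "(\<Sum>i\<in>{1..m}. tt (Suc i) - tt i) = tt (Suc m) - tt 1" by (rule sum_Suc_diff) simp
    also have "\<dots> \<le> 1" using ttm1 t ttnn[of 1] by simp
    finally show ?thesis .
  qed
  have Dle: "tt (Suc i) - tt i \<le> 1" "0 \<le> tt (Suc i) - tt i" if "i \<le> m" for i
    using tle[of i "Suc i"] tle[of "Suc i" "Suc m"] ttnn[of i] ttm1 t that by auto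
  have "(\<Sum>i\<in>{1..m}. (tt (Suc i) - tt i)*V + ((tt (Suc i) - tt i)*C)^2)
        \<le> (\<Sum>i\<in>{1..m}. (tt (Suc i) - tt i) * (V + C^2))"
  proof (rule sum_mono)
    fix i assume i: "i \<in> {1..m}"
    have "(tt (Suc i) - tt i)^2 \<le> (tt (Suc i) - tt i) * 1"
      using Dle[of i] i unfolding power2_eq_square by (intro mult_left_mono) auto
    then have "(tt (Suc i) - tt i)^2 * C^2 \<le> (tt (Suc i) - tt i) * C^2" by (intro mult_right_mono) auto
    moreover have "((tt (Suc i) - tt i)*C)^2 = (tt (Suc i) - tt i)^2 * C^2" by (simp add: power_mult_distrib)
    ultimately show "(tt (Suc i) - tt i)*V + ((tt (Suc i) - tt i)*C)^2 \<le> (tt (Suc i) - tt i) * (V + C^2)"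
      by (simp add: distrib_left)
  qed
  also have "\<dots> = (\<Sum>i\<in>{1..m}. tt (Suc i) - tt i) * (V + C^2)" by (simp add: sum_distrib_right)
  also have "\<dots> \<le> 1 * (V + C^2)" using sumD V0 by (intro mult_right_mono) auto
  finally have ES: "(\<integral>\<omega>. (S m \<omega>)^2 \<partial>M) \<le> V + C^2" using L2 by simp
  have SmM: "S m \<in> borel_measurable M"
    unfolding S_def using Xm ttnn GcM by (intro borel_measurable_sum borel_measurable_times borel_measurable_diff) auto
  have Xt0: "X t \<in> borel_measurable M" "X 0 \<in> borel_measurable M" using Xm t by auto
  have Z0M: "Z0 \<in> borel_measurable M" unfolding Z0_def using Xt0 GcM[of 0] by measurable
  have mom0: "integrable M (\<lambda>\<omega>. (X t \<omega> - X 0 \<omega>)^2)" "(\<integral>\<omega>. (X t \<omega> - X 0 \<omega>)^2 \<partial>M) \<le> t*V + (t*C)^2"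
    using mom[of 0 t] t by auto
  have Z0le: "(Z0 \<omega>)^2 \<le> (X t \<omega> - X 0 \<omega>)^2" for \<omega>
  proof -
    have "(Gc 0 \<omega>)^2 \<le> 1" using Gcb[of 0 \<omega>] by (simp add: abs_square_le_1)
    then have "(Gc 0 \<omega>)^2 * (X t \<omega> - X 0 \<omega>)^2 \<le> 1 * (X t \<omega> - X 0 \<omega>)^2" by (intro mult_right_mono) auto
    then show ?thesis unfolding Z0_def by (simp add: power_mult_distrib)
  qed
  have Z0I: "integrable M (\<lambda>\<omega>. (Z0 \<omega>)^2)"
    by (rule Bochner_Integration.integrable_bound[OF mom0(1)]) (use Z0le Z0M in \<open>auto intro!: AE_I2\<close>)
  have "t*V + (t*C)^2 \<le> V + C^2"
  proof -
    have "t*V \<le> V" using t V0 by (simp add: mult_left_le_one_le)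
    moreover have "(t*C)^2 \<le> C^2" using t C0 by (simp add: power_mult_distrib mult_left_le_one_le power_le_one)
    ultimately show ?thesis by linarith
  qed
  then have EZ0: "(\<integral>\<omega>. (Z0 \<omega>)^2 \<partial>M) \<le> V + C^2"
    using integral_mono[OF Z0I mom0(1) Z0le] mom0(2) by linarith
  have Y'dec: "Y' \<omega> = Z0 \<omega> + S m \<omega> + (\<Sum>i\<in>{1..m}. Gc i \<omega> * c i)" for \<omega>
    unfolding Y'_def S_def by (simp add: sum.distrib[symmetric] algebra_simps)
  have Z2b: "\<bar>\<Sum>i\<in>{1..m}. Gc i \<omega> * c i\<bar> \<le> C" for \<omega>
  proof -
    have "\<bar>\<Sum>i\<in>{1..m}. Gc i \<omega> * c i\<bar> \<le> (\<Sum>i\<in>{1..m}. \<bar>Gc i \<omega> * c i\<bar>)" by (rule sum_abs)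
    also have "\<dots> \<le> (\<Sum>i\<in>{1..m}. (tt (Suc i) - tt i) * C)"
    proof (rule sum_mono)
      fix i assume i: "i \<in> {1..m}"
      have "\<bar>c i\<bar> \<le> (tt (Suc i) - tt i) * C" unfolding c_def using mom[of "tt i" "tt (Suc i)"] ttnn tle i by auto
      moreover have "\<bar>Gc i \<omega> * c i\<bar> \<le> 1 * \<bar>c i\<bar>" unfolding abs_mult using Gcb by (intro mult_right_mono) auto
      ultimately show "\<bar>Gc i \<omega> * c i\<bar> \<le> (tt (Suc i) - tt i) * C" by simp
    qed
    also have "\<dots> = (\<Sum>i\<in>{1..m}. tt (Suc i) - tt i) * C" by (simp add: sum_distrib_right)
    also have "\<dots> \<le> 1 * C" using sumD C0 by (intro mult_right_mono) auto
    finally show ?thesis by simp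
  qed
  define a where "a = (K - C) / 2"
  have a: "0 < a" using K a_def by simp
  have Y'M: "Y' \<in> borel_measurable M"
    unfolding Y'_def using Z0M Xm ttnn GcM by (intro borel_measurable_add borel_measurable_sum borel_measurable_times borel_measurable_diff) auto
  have sub: "{\<omega>\<in>space M. \<bar>Y' \<omega>\<bar> > K} \<subseteq> {\<omega>\<in>space M. a \<le> \<bar>Z0 \<omega>\<bar>} \<union> {\<omega>\<in>space M. a \<le> \<bar>S m \<omega>\<bar>}"
  proof safe
    fix \<omega> assume "\<omega> \<in> space M" and k1: "K < \<bar>Y' \<omega>\<bar>" and k2: "\<not> a \<le> \<bar>S m \<omega>\<bar>"
    have k3: "\<bar>Y' \<omega>\<bar> \<le> \<bar>Z0 \<omega>\<bar> + \<bar>S m \<omega>\<bar> + \<bar>\<Sum>i\<in>{1..m}. Gc i \<omega> * c i\<bar>"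
      unfolding Y'dec by arith
    show "a \<le> \<bar>Z0 \<omega>\<bar>" using aux_lin[OF k1 k2[unfolded a_def] k3 Z2b[of \<omega>]] unfolding a_def .
  qed
  have "measure (completion M) {\<omega>\<in>space M. \<bar>Y \<omega>\<bar> > K} = prob {\<omega>\<in>space M. \<bar>Y' \<omega>\<bar> > K}"
    by (rule completion_measure_AE) (use AEY Y'M in auto)
  also have "\<dots> \<le> prob ({\<omega>\<in>space M. a \<le> \<bar>Z0 \<omega>\<bar>} \<union> {\<omega>\<in>space M. a \<le> \<bar>S m \<omega>\<bar>})"
    by (rule finite_measure_mono[OF sub]) (use Z0M SmM in measurable)
  also have "\<dots> \<le> prob {\<omega>\<in>space M. a \<le> \<bar>Z0 \<omega>\<bar>} + prob {\<omega>\<in>space M. a \<le> \<bar>S m \<omega>\<bar>}"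
    by (rule measure_Un_le) (use Z0M SmM in measurable)
  also have "\<dots> \<le> (V + C^2) / a^2 + (V + C^2) / a^2"
    by (intro add_mono cheb2[OF _ Z0M Z0I EZ0 a] cheb2[OF _ SmM _ ES a]) (use L2 in \<open>auto intro: prob_space_axioms\<close>)
  also have "\<dots> = 8 * (V + C^2) / (K - C)^2" unfolding a_def by (simp add: field_simps power2_eq_square)
  finally show ?thesis .
qed



lemma psi_tss_bounds:
  fixes \<Lambda> :: "real measure" and h :: real
  assumes I2: "integrable \<Lambda> (\<lambda>x. x^2)" and I1: "integrable \<Lambda> (\<lambda>x. \<bar>x\<bar>)"
  shows "- (LINT x|\<Lambda>. x^2) * h^2 / 2 \<le> Re (driftless_subordinator_exponent \<Lambda> h)"
    and "\<bar>Im (driftless_subordinator_exponent \<Lambda> h)\<bar> \<le> (LINT x|\<Lambda>. \<bar>x\<bar>) * \<bar>h\<bar>"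
proof -
  have V0: "0 \<le> (LINT x|\<Lambda>. x^2)" by (rule integral_nonneg_AE) auto
  have C0: "0 \<le> (LINT x|\<Lambda>. \<bar>x\<bar>)" by (rule integral_nonneg_AE) auto
  have "- (LINT x|\<Lambda>. x^2) * h^2 / 2 \<le> Re (driftless_subordinator_exponent \<Lambda> h) \<and>
        \<bar>Im (driftless_subordinator_exponent \<Lambda> h)\<bar> \<le> (LINT x|\<Lambda>. \<bar>x\<bar>) * \<bar>h\<bar>"
  proof (cases "integrable \<Lambda> (\<lambda>x. iexp (h * x) - 1)")
    case True
    have re: "Re (driftless_subordinator_exponent \<Lambda> h) = (LINT x|\<Lambda>. cos (h * x) - 1)"
      unfolding driftless_subordinator_exponent_def
      by (subst integral_Re[OF True, symmetric]) (simp add: Re_exp)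
    have im: "Im (driftless_subordinator_exponent \<Lambda> h) = (LINT x|\<Lambda>. sin (h * x))"
      unfolding driftless_subordinator_exponent_def
      by (subst integral_Im[OF True, symmetric]) (simp add: Im_exp)
    have cI: "integrable \<Lambda> (\<lambda>x. cos (h * x) - 1)" using integrable_Re[OF True] by (simp add: Re_exp)
    have sI: "integrable \<Lambda> (\<lambda>x. sin (h * x))" using integrable_Im[OF True] by (simp add: Im_exp)
    have "(LINT x|\<Lambda>. - (h^2/2) * x^2) \<le> (LINT x|\<Lambda>. cos (h * x) - 1)"
    proof (rule integral_mono)
      show "integrable \<Lambda> (\<lambda>x. - (h^2/2) * x^2)" using I2 by simp
      show "- (h^2/2) * x^2 \<le> cos (h * x) - 1" for x
        using cos_sin_taylor1(1)[of "h*x"] by (simp add: power_mult_distrib abs_le_iff)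
    qed (rule cI)
    then have 1: "- (LINT x|\<Lambda>. x^2) * h^2 / 2 \<le> Re (driftless_subordinator_exponent \<Lambda> h)"
      unfolding re by (simp add: algebra_simps)
    have "\<bar>LINT x|\<Lambda>. sin (h * x)\<bar> \<le> (LINT x|\<Lambda>. \<bar>sin (h * x)\<bar>)" by (rule integral_abs_bound)
    also have "\<dots> \<le> (LINT x|\<Lambda>. \<bar>h\<bar> * \<bar>x\<bar>)"
      by (rule integral_mono) (use sI I1 abs_sin_x_le_abs_x[of "h * _"] in \<open>auto simp: abs_mult\<close>)
    finally have 2: "\<bar>Im (driftless_subordinator_exponent \<Lambda> h)\<bar> \<le> (LINT x|\<Lambda>. \<bar>x\<bar>) * \<bar>h\<bar>"
      unfolding im by (simp add: mult.commute)
    show ?thesis using 1 2 by simp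
  next
    case False
    then have "driftless_subordinator_exponent \<Lambda> h = 0"
      unfolding driftless_subordinator_exponent_def by (rule not_integrable_integral_eq)
    then show ?thesis using V0 C0 by simp
  qed
  then show "- (LINT x|\<Lambda>. x^2) * h^2 / 2 \<le> Re (driftless_subordinator_exponent \<Lambda> h)"
    and "\<bar>Im (driftless_subordinator_exponent \<Lambda> h)\<bar> \<le> (LINT x|\<Lambda>. \<bar>x\<bar>) * \<bar>h\<bar>" by auto
qed

lemma psi_mts_bounds:
  fixes \<Lambda> :: "real measure" and h :: real
  assumes I2: "integrable \<Lambda> (\<lambda>x. x^2)" and h: "0 < h" "h \<le> 1"
  shows "- (LINT x|\<Lambda>. x^2) * h^2 / 2 \<le> Re (triplet_exponent 0 0 \<Lambda> h)"
    and "\<bar>Im (triplet_exponent 0 0 \<Lambda> h)\<bar> \<le> (LINT x|\<Lambda>. x^2) * h"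
proof -
  define f where "f x = iexp (h * x) - 1 - \<i> * complex_of_real (h * x * indicator {-1..1} x)" for x
  have te: "triplet_exponent 0 0 \<Lambda> h = (CLINT x|\<Lambda>. f x)"
    unfolding triplet_exponent_def f_def by simp
  have V0: "0 \<le> (LINT x|\<Lambda>. x^2)" by (rule integral_nonneg_AE) auto
  have "- (LINT x|\<Lambda>. x^2) * h^2 / 2 \<le> Re (CLINT x|\<Lambda>. f x) \<and>
        \<bar>Im (CLINT x|\<Lambda>. f x)\<bar> \<le> (LINT x|\<Lambda>. x^2) * h"
  proof (cases "integrable \<Lambda> f")
    case True
    have re: "Re (CLINT x|\<Lambda>. f x) = (LINT x|\<Lambda>. cos (h * x) - 1)"
      by (subst integral_Re[OF True, symmetric]) (simp add: f_def Re_exp)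
    have im: "Im (CLINT x|\<Lambda>. f x) = (LINT x|\<Lambda>. sin (h * x) - h * x * indicator {-1..1} x)"
      by (subst integral_Im[OF True, symmetric]) (simp add: f_def Im_exp)
    have cI: "integrable \<Lambda> (\<lambda>x. cos (h * x) - 1)" using integrable_Re[OF True] by (simp add: f_def Re_exp)
    have sI: "integrable \<Lambda> (\<lambda>x. sin (h * x) - h * x * indicator {-1..1} x)"
      using integrable_Im[OF True] by (simp add: f_def Im_exp)
    have "(LINT x|\<Lambda>. - (h^2/2) * x^2) \<le> (LINT x|\<Lambda>. cos (h * x) - 1)"
    proof (rule integral_mono)
      show "integrable \<Lambda> (\<lambda>x. - (h^2/2) * x^2)" using I2 by simp
      show "- (h^2/2) * x^2 \<le> cos (h * x) - 1" for x
        using cos_sin_taylor1(1)[of "h*x"] by (simp add: power_mult_distrib abs_le_iff)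
    qed (rule cI)
    then have 1: "- (LINT x|\<Lambda>. x^2) * h^2 / 2 \<le> Re (CLINT x|\<Lambda>. f x)"
      unfolding re by (simp add: algebra_simps)
    have pt: "\<bar>sin (h * x) - h * x * indicator {-1..1} x\<bar> \<le> h * x^2" for x
    proof (cases "x \<in> {-1..1}")
      case True
      have "\<bar>sin (h * x) - h * x\<bar> \<le> (h*x)^2/2" by (rule cos_sin_taylor1(2))
      also have "\<dots> = h * (h * x^2) / 2" by (simp add: power2_eq_square)
      also have "\<dots> \<le> h * x^2"
      proof -
        have "h * x^2 \<le> 1 * x^2" using h by (intro mult_right_mono) auto
        then have "h * (h * x^2) \<le> h * x^2" using h by (simp add: mult_left_le_one_le)
        moreover have "0 \<le> h * x^2" using h by simp
        ultimately show ?thesis by simp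
      qed
      finally show ?thesis using True by simp
    next
      case False
      then have "1 < \<bar>x\<bar>" by auto
      have "\<bar>sin (h * x)\<bar> \<le> \<bar>h * x\<bar>" by (rule abs_sin_x_le_abs_x)
      also have "\<dots> = h * \<bar>x\<bar>" using h by (simp add: abs_mult)
      also have "\<dots> \<le> h * x^2"
      proof -
        have "\<bar>x\<bar> * 1 \<le> \<bar>x\<bar> * \<bar>x\<bar>" using \<open>1 < \<bar>x\<bar>\<close> by (intro mult_left_mono) auto
        then have "\<bar>x\<bar> \<le> x^2" by (simp add: power2_eq_square abs_mult_self_eq)
        then show ?thesis using h by (intro mult_left_mono) auto
      qed
      finally show ?thesis using False by simp
    qed
    have "\<bar>LINT x|\<Lambda>. sin (h * x) - h * x * indicator {-1..1} x\<bar> \<le> (LINT x|\<Lambda>. \<bar>sin (h * x) - h * x * indicator {-1..1} x\<bar>)"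
      by (rule integral_abs_bound)
    also have "\<dots> \<le> (LINT x|\<Lambda>. h * x^2)"
      by (rule integral_mono) (use sI I2 pt in auto)
    finally have 2: "\<bar>Im (CLINT x|\<Lambda>. f x)\<bar> \<le> (LINT x|\<Lambda>. x^2) * h"
      unfolding im by (simp add: mult.commute)
    show ?thesis using 1 2 by simp
  next
    case False
    then have "(CLINT x|\<Lambda>. f x) = 0" by (rule not_integrable_integral_eq)
    then show ?thesis using V0 h by simp
  qed
  then show "- (LINT x|\<Lambda>. x^2) * h^2 / 2 \<le> Re (triplet_exponent 0 0 \<Lambda> h)"
    and "\<bar>Im (triplet_exponent 0 0 \<Lambda> h)\<bar> \<le> (LINT x|\<Lambda>. x^2) * h" unfolding te by auto
qed



lemma lint_from_nn:
  fixes g f :: "real \<Rightarrow> real"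
  assumes fm: "f \<in> borel_measurable borel" and f0: "\<And>x. 0 \<le> f x"
    and nn: "(\<integral>\<^sup>+x. ennreal (f x) \<partial>density lborel g) = ennreal c" and c: "0 \<le> c"
  shows "integrable (density lborel g) f \<and> (LINT x|density lborel g. f x) = c"
proof -
  have fm': "f \<in> borel_measurable (density lborel g)" using fm by simp
  have "integrable (density lborel g) f"
    by (rule integrableI_bounded) (use fm' nn f0 in auto)
  moreover have "(LINT x|density lborel g. f x) = enn2real (\<integral>\<^sup>+x. ennreal (f x) \<partial>density lborel g)"
    by (rule integral_eq_nn_integral) (use fm' f0 in auto)
  ultimately show ?thesis using nn c by simp
qed

lemma tss_density_measurable[measurable]: "tss_density \<alpha> \<in> borel_measurable borel"
  unfolding tss_density_def by measurable

lemma tss_nn: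
  assumes a: "0 < \<alpha>" "\<alpha> < 1" and p: "0 < p"
  shows "(\<integral>\<^sup>+x. ennreal (tss_density \<alpha> x * x powr (p + \<alpha>)) \<partial>lborel) = ennreal (Gamma p / Gamma (1 - \<alpha>))"
proof -
  have G: "0 < Gamma (1 - \<alpha>)" using a by (intro Gamma_real_pos) auto
  have pt: "tss_density \<alpha> x * x powr (p + \<alpha>) = (1 / Gamma (1 - \<alpha>)) * (indicator {0..} x * x powr (p - 1) / exp x)" for x
  proof (cases "0 < x")
    case True
    have "x powr (p + \<alpha>) / x powr (1 + \<alpha>) = x powr (p - 1)" using True by (simp add: powr_diff[symmetric])
    then show ?thesis using True G unfolding tss_density_def
      by (simp add: exp_minus field_simps)
  next
    case False
    then show ?thesis unfolding tss_density_def by (cases "x = 0") auto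
  qed
  have "(\<integral>\<^sup>+x. ennreal (tss_density \<alpha> x * x powr (p + \<alpha>)) \<partial>lborel)
      = (\<integral>\<^sup>+x. ennreal (1 / Gamma (1 - \<alpha>)) * ennreal (indicator {0..} x * x powr (p - 1) / exp x) \<partial>lborel)"
    by (intro nn_integral_cong, simp only: pt, rule ennreal_mult) (use G in auto)
  also have "\<dots> = ennreal (1 / Gamma (1 - \<alpha>)) * (\<integral>\<^sup>+x. ennreal (indicator {0..} x * x powr (p - 1) / exp x) \<partial>lborel)"
    by (rule nn_integral_cmult) measurable
  also have "\<dots> = ennreal (1 / Gamma (1 - \<alpha>)) * ennreal (Gamma p)"
    using Gamma_conv_nn_integral_real[OF p] by simp
  also have "\<dots> = ennreal (1 / Gamma (1 - \<alpha>) * Gamma p)"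
    by (rule ennreal_mult[symmetric]) (use G Gamma_real_pos[OF p] in auto)
  also have "\<dots> = ennreal (Gamma p / Gamma (1 - \<alpha>))" by simp
  finally show ?thesis .
qed

lemma tss_moments:
  assumes a: "0 < \<alpha>" "\<alpha> < 1"
  defines "\<Lambda> \<equiv> levy_measure_of_density (tss_density \<alpha>)"
  shows "integrable \<Lambda> (\<lambda>x. x^2) \<and> (LINT x|\<Lambda>. x^2) \<le> 1"
    and "integrable \<Lambda> (\<lambda>x. \<bar>x\<bar>) \<and> (LINT x|\<Lambda>. \<bar>x\<bar>) \<le> 1"
proof -
  have G: "0 < Gamma (1 - \<alpha>)" using a by (intro Gamma_real_pos) auto
  have tss0: "0 \<le> tss_density \<alpha> x" for x using G unfolding tss_density_def by auto
  have tss_pos: "tss_density \<alpha> x = 0" if "x \<le> 0" for x using that unfolding tss_density_def by auto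
  have nd: "(\<integral>\<^sup>+x. ennreal (f x) \<partial>\<Lambda>) = (\<integral>\<^sup>+x. ennreal (tss_density \<alpha> x * f x) \<partial>lborel)"
    if "f \<in> borel_measurable borel" "\<And>x. 0 \<le> f x" for f
    unfolding \<Lambda>_def levy_measure_of_density_def
    using that tss0 by (subst nn_integral_density) (auto simp: ennreal_mult)
  have e2: "tss_density \<alpha> x * x^2 = tss_density \<alpha> x * x powr ((2 - \<alpha>) + \<alpha>)" for x
    by (cases "0 < x") (auto simp: tss_pos powr_numeral)
  have e1: "tss_density \<alpha> x * \<bar>x\<bar> = tss_density \<alpha> x * x powr ((1 - \<alpha>) + \<alpha>)" for x
    by (cases "0 < x") (auto simp: tss_pos)
  have n2: "(\<integral>\<^sup>+x. ennreal (x^2) \<partial>\<Lambda>) = ennreal (1 - \<alpha>)"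
  proof -
    have "(\<integral>\<^sup>+x. ennreal (x^2) \<partial>\<Lambda>) = (\<integral>\<^sup>+x. ennreal (tss_density \<alpha> x * x^2) \<partial>lborel)"
      by (rule nd) auto
    also have "\<dots> = (\<integral>\<^sup>+x. ennreal (tss_density \<alpha> x * x powr ((2 - \<alpha>) + \<alpha>)) \<partial>lborel)"
      by (simp only: e2)
    also have "\<dots> = ennreal (Gamma (2 - \<alpha>) / Gamma (1 - \<alpha>))" by (rule tss_nn) (use a in auto)
    also have "Gamma (2 - \<alpha>) = (1 - \<alpha>) * Gamma (1 - \<alpha>)"
    proof -
      have "1 - \<alpha> \<notin> \<int>\<^sub>\<le>\<^sub>0" using a nonpos_Ints_nonpos[of "1 - \<alpha>"] by auto
      then have "Gamma ((1 - \<alpha>) + 1) = (1 - \<alpha>) * Gamma (1 - \<alpha>)" by (rule Gamma_plus1)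
      then show ?thesis by (simp add: algebra_simps)
    qed
    finally show ?thesis using G by simp
  qed
  have n1: "(\<integral>\<^sup>+x. ennreal \<bar>x\<bar> \<partial>\<Lambda>) = ennreal 1"
  proof -
    have "(\<integral>\<^sup>+x. ennreal \<bar>x\<bar> \<partial>\<Lambda>) = (\<integral>\<^sup>+x. ennreal (tss_density \<alpha> x * \<bar>x\<bar>) \<partial>lborel)"
      by (rule nd) auto
    also have "\<dots> = (\<integral>\<^sup>+x. ennreal (tss_density \<alpha> x * x powr ((1 - \<alpha>) + \<alpha>)) \<partial>lborel)"
      by (simp only: e1)
    also have "\<dots> = ennreal (Gamma (1 - \<alpha>) / Gamma (1 - \<alpha>))" by (rule tss_nn) (use a in auto)
    finally have "(\<integral>\<^sup>+x. ennreal \<bar>x\<bar> \<partial>\<Lambda>) = ennreal (Gamma (1 - \<alpha>) / Gamma (1 - \<alpha>))" .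
    then show ?thesis using G by simp
  qed
  have L: "\<Lambda> = density lborel (\<lambda>s. ennreal (tss_density \<alpha> s))"
    unfolding \<Lambda>_def levy_measure_of_density_def ..
  show "integrable \<Lambda> (\<lambda>x. x^2) \<and> (LINT x|\<Lambda>. x^2) \<le> 1"
    using lint_from_nn[of "\<lambda>x. x^2", OF _ _ n2[unfolded L]] a unfolding L by auto
  show "integrable \<Lambda> (\<lambda>x. \<bar>x\<bar>) \<and> (LINT x|\<Lambda>. \<bar>x\<bar>) \<le> 1"
    using lint_from_nn[of "\<lambda>x. \<bar>x\<bar>", OF _ _ n1[unfolded L]] unfolding L by auto
qed



lemma exp_int1: "(\<integral>\<^sup>+u. ennreal (indicator {0..} u * exp (- u)) \<partial>lborel) = 1"
proof -
  have "(\<integral>\<^sup>+u. ennreal (indicator {0..} u * exp (- u)) \<partial>lborel) =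
        (\<integral>\<^sup>+u. ennreal (indicator {0..} u * u powr (1 - 1) / exp u) \<partial>lborel)"
    by (intro nn_integral_cong_AE eventually_mono[OF AE_lborel_singleton[of 0]])
       (auto simp: indicator_def exp_minus field_simps)
  also have "\<dots> = Gamma 1" using Gamma_conv_nn_integral_real[of 1] by simp
  finally show ?thesis by simp
qed

lemma gamma_like_bound:
  assumes \<nu>: "0 \<le> \<nu>" "\<nu> \<le> 1"
  shows "(\<integral>\<^sup>+y. ennreal (indicator {0<..} y * y powr (2 - \<nu>) * exp (- y)) \<partial>lborel) \<le> 3"
proof -
  have "(\<integral>\<^sup>+y. ennreal (indicator {0<..} y * y powr (2 - \<nu>) * exp (- y)) \<partial>lborel) \<le>
        (\<integral>\<^sup>+y. ennreal (indicator {0..} y * y powr (1 - 1) / exp y) + ennreal (indicator {0..} y * y powr (3 - 1) / exp y) \<partial>lborel)"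
  proof (intro nn_integral_mono)
    fix y :: real
    show "ennreal (indicator {0<..} y * y powr (2 - \<nu>) * exp (- y)) \<le>
          ennreal (indicator {0..} y * y powr (1 - 1) / exp y) + ennreal (indicator {0..} y * y powr (3 - 1) / exp y)"
    proof (cases "0 < y")
      case True
      have "y powr (2 - \<nu>) \<le> 1 + y powr 2"
      proof (cases "y \<le> 1")
        case True
        then have "y powr (2 - \<nu>) \<le> 1" using \<open>0 < y\<close> \<nu> by (intro powr_le1) auto
        moreover have "0 \<le> y powr 2" by simp
        ultimately show ?thesis by linarith
      next
        case False
        then have "y powr (2 - \<nu>) \<le> y powr 2" using \<nu> by (intro powr_mono) auto
        then show ?thesis by simp
      qed
      then have "y powr (2 - \<nu>) * exp (- y) \<le> (1 + y powr 2) * exp (- y)" by (intro mult_right_mono) auto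
      then show ?thesis using True
        by (simp add: ennreal_plus[symmetric] del: ennreal_plus exp_minus_inverse)
           (simp add: exp_minus field_simps)
    qed auto
  qed
  also have "\<dots> = (\<integral>\<^sup>+y. ennreal (indicator {0..} y * y powr (1 - 1) / exp y) \<partial>lborel) +
                  (\<integral>\<^sup>+y. ennreal (indicator {0..} y * y powr (3 - 1) / exp y) \<partial>lborel)"
    by (rule nn_integral_add) auto
  also have "\<dots> = ennreal (Gamma 1) + ennreal (Gamma 3)"
    using Gamma_conv_nn_integral_real[of 1] Gamma_conv_nn_integral_real[of 3] by simp
  also have "\<dots> = 3"
  proof -
    have "Gamma (3::real) = 2" using Gamma_fact[of 2] by (simp add: numeral_eq_Suc)
    then show ?thesis by simp
  qed
  finally show ?thesis .
qed

lemma inner_bound: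
  assumes \<nu>: "0 \<le> \<nu>" "\<nu> \<le> 1" and c: "1 \<le> c"
  shows "(\<integral>\<^sup>+x. ennreal (indicator {0<..} x * x powr (2 - \<nu>) * exp (- (x * c))) \<partial>lborel) \<le> ennreal (3 * c powr (\<nu> - 3))"
proof -
  have c0: "0 < c" using c by simp
  have "(\<integral>\<^sup>+x. ennreal (indicator {0<..} x * x powr (2 - \<nu>) * exp (- (x * c))) \<partial>lborel) =
        ennreal \<bar>1/c\<bar> * (\<integral>\<^sup>+y. ennreal (indicator {0<..} (0 + 1/c * y) * (0 + 1/c * y) powr (2 - \<nu>) * exp (- ((0 + 1/c * y) * c))) \<partial>lborel)"
    by (rule nn_integral_real_affine) (use c0 in auto)
  also have "(\<integral>\<^sup>+y. ennreal (indicator {0<..} (0 + 1/c * y) * (0 + 1/c * y) powr (2 - \<nu>) * exp (- ((0 + 1/c * y) * c))) \<partial>lborel)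
      = (\<integral>\<^sup>+y. ennreal (c powr (\<nu> - 2)) * ennreal (indicator {0<..} y * y powr (2 - \<nu>) * exp (- y)) \<partial>lborel)"
  proof (rule nn_integral_cong)
    fix y :: real
    show "ennreal (indicator {0<..} (0 + 1/c * y) * (0 + 1/c * y) powr (2 - \<nu>) * exp (- ((0 + 1/c * y) * c))) =
          ennreal (c powr (\<nu> - 2)) * ennreal (indicator {0<..} y * y powr (2 - \<nu>) * exp (- y))"
    proof (cases "0 < y")
      case True
      have "(1/c * y) powr (2 - \<nu>) = (1/c) powr (2 - \<nu>) * y powr (2 - \<nu>)"
        using powr_mult[of "1/c" y "2 - \<nu>"] True c0 by simp
      also have "(1/c) powr (2 - \<nu>) = c powr (\<nu> - 2)"
      proof -
        have "(1/c) powr (2 - \<nu>) = 1 / c powr (2 - \<nu>)" using c0 by (simp add: powr_divide)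
        also have "\<dots> = c powr (- (2 - \<nu>))" using powr_minus_divide[of c "2 - \<nu>"] by simp
        finally show ?thesis by simp
      qed
      finally have e: "(1/c * y) powr (2 - \<nu>) = c powr (\<nu> - 2) * y powr (2 - \<nu>)" .
      have "0 < 1/c * y" using True c0 by simp
      then show ?thesis using True c0 e
        by (simp add: ennreal_mult[symmetric] indicator_def mult.assoc)
    next
      case False
      then have "\<not> 0 < 1/c * y" using c0 by (simp add: zero_less_divide_iff)
      then show ?thesis using False by (simp add: indicator_def)
    qed
  qed
  also have "\<dots> = ennreal (c powr (\<nu> - 2)) * (\<integral>\<^sup>+y. ennreal (indicator {0<..} y * y powr (2 - \<nu>) * exp (- y)) \<partial>lborel)"
    by (rule nn_integral_cmult) measurable
  also have "ennreal \<bar>1/c\<bar> * (ennreal (c powr (\<nu> - 2)) * (\<integral>\<^sup>+y. ennreal (indicator {0<..} y * y powr (2 - \<nu>) * exp (- y)) \<partial>lborel))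
      \<le> ennreal \<bar>1/c\<bar> * (ennreal (c powr (\<nu> - 2)) * 3)"
    by (intro mult_left_mono gamma_like_bound \<nu>) auto
  also have "\<dots> = ennreal (3 * c powr (\<nu> - 3))"
  proof -
    have "1/c * c powr (\<nu> - 2) = c powr (\<nu> - 3)"
      using c0 by (simp add: powr_diff field_simps powr_numeral power3_eq_cube power2_eq_square)
    moreover have "ennreal \<bar>1/c\<bar> * (ennreal (c powr (\<nu> - 2)) * 3) = ennreal (\<bar>1/c\<bar> * c powr (\<nu> - 2)) * ennreal 3"
      by (subst ennreal_mult') (auto simp: mult.assoc)
    moreover have "ennreal (3 * c powr (\<nu> - 3)) = ennreal (c powr (\<nu> - 3)) * ennreal 3"
      by (subst ennreal_mult'') (auto simp: mult.commute)
    ultimately show ?thesis using c0 by simp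
  qed
  finally show ?thesis .
qed

lemma borel_measurable_cosh_real[measurable]: "(cosh :: real \<Rightarrow> real) \<in> borel_measurable borel"
  by (intro borel_measurable_continuous_onI continuous_intros)

lemma bessel_K_measurable[measurable]: "bessel_K \<nu> \<in> borel_measurable borel"
  unfolding bessel_K_def set_lebesgue_integral_def by measurable

lemma mts_density_measurable[measurable]: "mts_density \<alpha> \<in> borel_measurable borel"
  unfolding mts_density_def by measurable

lemma bessel_K_nonneg: "0 \<le> bessel_K \<nu> r"
  unfolding bessel_K_def set_lebesgue_integral_def
  by (rule integral_nonneg_AE) (auto simp: indicator_def intro!: AE_I2 less_imp_le[OF cosh_real_pos])

lemma bessel_K_le:
  "ennreal (bessel_K \<nu> r) \<le> (\<integral>\<^sup>+u. ennreal (indicator {0..} u * exp (- r * cosh u) * cosh (\<nu> * u)) \<partial>lborel)"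
proof -
  have "bessel_K \<nu> r = enn2real (\<integral>\<^sup>+u. ennreal (indicator {0..} u * (exp (- r * cosh u) * cosh (\<nu> * u))) \<partial>lborel)"
    unfolding bessel_K_def set_lebesgue_integral_def
    by (subst integral_eq_nn_integral) (auto simp: indicator_def intro!: AE_I2 less_imp_le[OF cosh_real_pos])
  then show ?thesis by (simp add: ennreal_enn2real_if mult.assoc)
qed

lemma cosh_decay:
  fixes \<nu> u :: real
  assumes \<nu>: "0 \<le> \<nu>" "\<nu> \<le> 1" and u: "0 \<le> u"
  shows "cosh (\<nu> * u) * cosh u powr (\<nu> - 3) \<le> 2 * exp (- u)"
proof -
  have c1: "1 \<le> cosh u" by (rule cosh_real_ge_1)
  have "cosh (\<nu> * u) \<le> cosh u"
    using \<nu> u by (subst cosh_real_nonneg_le_iff) (auto simp: mult_left_le_one_le)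
  moreover have "cosh u powr (\<nu> - 3) \<le> cosh u powr (-2)" using \<nu> c1 by (intro powr_mono) auto
  ultimately have "cosh (\<nu> * u) * cosh u powr (\<nu> - 3) \<le> cosh u * cosh u powr (-2)"
    by (intro mult_mono) auto
  also have "cosh u * cosh u powr (-2) = 1 / cosh u"
    using c1 by (simp add: powr_minus_divide power2_eq_square)
  also have "1 / cosh u \<le> 2 * exp (- u)"
  proof -
    have "exp u / 2 \<le> cosh u" unfolding cosh_def by simp
    then have "1 / cosh u \<le> 1 / (exp u / 2)" by (intro divide_left_mono) auto
    then show ?thesis by (simp add: exp_minus field_simps)
  qed
  finally show ?thesis .
qed

lemma mts_moments:
  assumes a: "0 < \<alpha>" "\<alpha> < 1/2"
  defines "\<Lambda> \<equiv> levy_measure_of_density (mts_density \<alpha>)"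
  shows "integrable \<Lambda> (\<lambda>x. x^2) \<and> (LINT x|\<Lambda>. x^2) \<le> 4"
proof -
  define \<nu> where "\<nu> = \<alpha> + 1/2"
  have \<nu>: "0 \<le> \<nu>" "\<nu> \<le> 1" using a \<nu>_def by auto
  define Hb where "Hb x u = ennreal (indicator {0<..} x * x powr (2 - \<nu>) / pi * (indicator {0..} u * exp (- x * cosh u) * cosh (\<nu> * u)))" for x u :: real
  have Hbm: "(\<lambda>(x, u). Hb x u) \<in> borel_measurable (lborel \<Otimes>\<^sub>M lborel)"
    unfolding Hb_def by measurable
  define A where "A x = (\<integral>\<^sup>+u. Hb x u \<partial>lborel)" for x
  have Am: "A \<in> borel_measurable borel"
  proof -
    have "A \<in> borel_measurable lborel" unfolding A_def using Hbm by measurable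
    then show ?thesis by simp
  qed
  have mts0: "0 \<le> mts_density \<alpha> x" for x
    unfolding mts_density_def using bessel_K_nonneg by auto
  have step1: "ennreal (mts_density \<alpha> x * x^2) \<le> A x + A (- x)" for x
  proof (cases "x = 0")
    case True then show ?thesis by (simp add: mts_density_def)
  next
    case False
    define r where "r = \<bar>x\<bar>"
    have r: "0 < r" using False r_def by simp
    have "mts_density \<alpha> x * x^2 = (r powr (2 - \<nu>) / pi) * bessel_K \<nu> r"
    proof -
      have "x^2 = r powr 2" using r r_def by (simp add: powr_numeral)
      moreover have "r powr 2 / r powr \<nu> = r powr (2 - \<nu>)" using r by (simp add: powr_diff)
      ultimately show ?thesis using False r unfolding mts_density_def r_def \<nu>_def
        by (simp add: field_simps)
    qed
    then have "ennreal (mts_density \<alpha> x * x^2) = ennreal (r powr (2 - \<nu>) / pi) * ennreal (bessel_K \<nu> r)"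
      by (simp only:) (rule ennreal_mult, simp, rule bessel_K_nonneg)
    also have "\<dots> \<le> ennreal (r powr (2 - \<nu>) / pi) * (\<integral>\<^sup>+u. ennreal (indicator {0..} u * exp (- r * cosh u) * cosh (\<nu> * u)) \<partial>lborel)"
      by (intro mult_left_mono bessel_K_le) auto
    also have "\<dots> = (\<integral>\<^sup>+u. ennreal (r powr (2 - \<nu>) / pi) * ennreal (indicator {0..} u * exp (- r * cosh u) * cosh (\<nu> * u)) \<partial>lborel)"
      by (rule nn_integral_cmult[symmetric]) measurable
    also have "\<dots> = A r"
      unfolding A_def Hb_def using r
      by (intro nn_integral_cong) (simp add: ennreal_mult[symmetric] indicator_def less_imp_le[OF cosh_real_pos])
    also have "\<dots> \<le> A x + A (- x)" unfolding r_def by (cases "0 \<le> x") auto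
    finally show ?thesis .
  qed
  have step2: "(\<integral>\<^sup>+x. ennreal (mts_density \<alpha> x * x^2) \<partial>lborel) \<le> 2 * (\<integral>\<^sup>+x. A x \<partial>lborel)"
  proof -
    have "(\<integral>\<^sup>+x. ennreal (mts_density \<alpha> x * x^2) \<partial>lborel) \<le> (\<integral>\<^sup>+x. A x + A (- x) \<partial>lborel)"
      by (intro nn_integral_mono step1)
    also have "\<dots> = (\<integral>\<^sup>+x. A x \<partial>lborel) + (\<integral>\<^sup>+x. A (- x) \<partial>lborel)"
      by (rule nn_integral_add) (use Am in auto)
    also have "(\<integral>\<^sup>+x. A (- x) \<partial>lborel) = (\<integral>\<^sup>+x. A x \<partial>lborel)"
      using nn_integral_real_affine[OF Am, of "-1" 0] by simp
    finally show ?thesis by (simp add: mult_2)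
  qed
  have step3: "(\<integral>\<^sup>+x. A x \<partial>lborel) = (\<integral>\<^sup>+u. (\<integral>\<^sup>+x. Hb x u \<partial>lborel) \<partial>lborel)"
    unfolding A_def by (rule lborel_pair.Fubini'[symmetric, OF Hbm])
  have step4: "(\<integral>\<^sup>+x. Hb x u \<partial>lborel) \<le> ennreal (indicator {0..} u * (6 / pi) * exp (- u))" for u
  proof (cases "0 \<le> u")
    case False
    then show ?thesis unfolding Hb_def by (simp add: indicator_def)
  next
    case True
    define k where "k = cosh (\<nu> * u) / pi"
    have k0: "0 \<le> k" unfolding k_def using less_imp_le[OF cosh_real_pos] by simp
    have "(\<integral>\<^sup>+x. Hb x u \<partial>lborel) = (\<integral>\<^sup>+x. ennreal k * ennreal (indicator {0<..} x * x powr (2 - \<nu>) * exp (- (x * cosh u))) \<partial>lborel)"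
      unfolding Hb_def k_def using True
      by (intro nn_integral_cong) (simp add: ennreal_mult[symmetric] indicator_def less_imp_le[OF cosh_real_pos] field_simps)
    also have "\<dots> = ennreal k * (\<integral>\<^sup>+x. ennreal (indicator {0<..} x * x powr (2 - \<nu>) * exp (- (x * cosh u))) \<partial>lborel)"
      by (rule nn_integral_cmult) measurable
    also have "\<dots> \<le> ennreal k * ennreal (3 * cosh u powr (\<nu> - 3))"
      by (intro mult_left_mono inner_bound \<nu> cosh_real_ge_1) auto
    also have "\<dots> = ennreal (3 / pi * (cosh (\<nu> * u) * cosh u powr (\<nu> - 3)))"
      using k0 by (simp add: ennreal_mult[symmetric] k_def)
    also have "\<dots> \<le> ennreal (3 / pi * (2 * exp (- u)))"
      by (intro ennreal_leI mult_left_mono cosh_decay \<nu> True) auto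
    also have "\<dots> = ennreal (indicator {0..} u * (6 / pi) * exp (- u))" using True by simp
    finally show ?thesis .
  qed
  have step5: "(\<integral>\<^sup>+u. ennreal (indicator {0..} u * (6 / pi) * exp (- u)) \<partial>lborel) = ennreal (6 / pi)"
  proof -
    have "(\<integral>\<^sup>+u. ennreal (indicator {0..} u * (6 / pi) * exp (- u)) \<partial>lborel)
        = (\<integral>\<^sup>+u. ennreal (6 / pi) * ennreal (indicator {0..} u * exp (- u)) \<partial>lborel)"
      by (intro nn_integral_cong) (simp add: ennreal_mult[symmetric] mult_ac)
    also have "\<dots> = ennreal (6 / pi) * (\<integral>\<^sup>+u. ennreal (indicator {0..} u * exp (- u)) \<partial>lborel)"
      by (rule nn_integral_cmult) measurable
    finally show ?thesis using exp_int1 by simp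
  qed
  have tot: "(\<integral>\<^sup>+x. ennreal (mts_density \<alpha> x * x^2) \<partial>lborel) \<le> ennreal 4"
  proof -
    have "(\<integral>\<^sup>+x. A x \<partial>lborel) \<le> ennreal (6 / pi)"
      unfolding step3 step5[symmetric] by (intro nn_integral_mono step4)
    then have "(\<integral>\<^sup>+x. ennreal (mts_density \<alpha> x * x^2) \<partial>lborel) \<le> 2 * ennreal (6 / pi)"
      using step2 by (meson mult_left_mono order_trans zero_le)
    also have "2 * ennreal (6 / pi) = ennreal (12 / pi)" using ennreal_mult'[of 2 "6 / pi"] by simp
    also have "\<dots> \<le> ennreal 4"
      using pi_gt3 by (intro ennreal_leI) (simp add: field_simps)
    finally show ?thesis .
  qed
  have L: "\<Lambda> = density lborel (\<lambda>s. ennreal (mts_density \<alpha> s))"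
    unfolding \<Lambda>_def levy_measure_of_density_def ..
  have nd: "(\<integral>\<^sup>+x. ennreal (x^2) \<partial>\<Lambda>) = (\<integral>\<^sup>+x. ennreal (mts_density \<alpha> x * x^2) \<partial>lborel)"
    unfolding L using mts0 by (subst nn_integral_density) (auto simp: ennreal_mult)
  have fm: "(\<lambda>x::real. x^2) \<in> borel_measurable \<Lambda>" unfolding L by simp
  have I: "integrable \<Lambda> (\<lambda>x. x^2)"
    by (rule integrableI_bounded) (use fm nd tot in \<open>auto intro: le_less_trans\<close>)
  have "(LINT x|\<Lambda>. x^2) = enn2real (\<integral>\<^sup>+x. ennreal (x^2) \<partial>\<Lambda>)"
    by (rule integral_eq_nn_integral) (use fm in auto)
  also have "\<dots> \<le> 4" unfolding nd using enn2real_mono[OF tot] by simp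
  finally show ?thesis using I by simp
qed



lemma simple_integrals_ne: assumes t: "0 \<le> t" shows "simple_integrals M X t \<noteq> {}"
proof -
  define tt :: "nat \<Rightarrow> real" where "tt i = (if i = 0 then 0 else t)" for i
  define H :: "nat \<Rightarrow> 'a \<Rightarrow> real" where "H = (\<lambda>i \<omega>. 0)"
  have cnm: "completed_natural_measurable M X s (\<lambda>\<omega>. 0)" for s
    unfolding completed_natural_measurable_def by (intro bexI[of _ "\<lambda>_. 0"]) auto
  have "(\<lambda>\<omega>. H 0 \<omega> * (X t \<omega> - X 0 \<omega>) + (\<Sum>i\<in>{1..0::nat}. H i \<omega> * (X (tt (Suc i)) \<omega> - X (tt i) \<omega>)))
        \<in> simple_integrals M X t"
    unfolding simple_integrals_def
    by (intro CollectI exI[of _ "0::nat"] exI[of _ tt] exI[of _ H] conjI refl)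
       (use cnm[of 0] cnm[of t] t in \<open>auto simp: tt_def H_def\<close>)
  then show ?thesis by blast
qed

lemma UT_family:
  fixes M :: "'i \<Rightarrow> 'a measure" and X :: "'i \<Rightarrow> real \<Rightarrow> 'a \<Rightarrow> real"
  assumes L: "\<And>a. a \<in> I \<Longrightarrow> levy_process (M a) (X a) (\<psi> a)" and V0: "0 \<le> V" and C0: "0 \<le> C"
    and re: "\<And>a h. a \<in> I \<Longrightarrow> 0 < h \<Longrightarrow> h \<le> 1 \<Longrightarrow> - V * h^2 / 2 \<le> Re (\<psi> a h)"
    and im: "\<And>a h. a \<in> I \<Longrightarrow> 0 < h \<Longrightarrow> h \<le> 1 \<Longrightarrow> \<bar>Im (\<psi> a h)\<bar> \<le> C * h"
    and I: "I \<noteq> {}"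
  shows "uniformly_tight I M X"
  unfolding uniformly_tight_def
proof
  fix t :: real assume t: "t \<in> {0<..1}"
  define F where "F a K = (SUP Y\<in>simple_integrals (M a) (X a) t.
      measure (completion (M a)) {\<omega> \<in> space (M a). \<bar>Y \<omega>\<bar> > K})" for a K
  define B where "B K = 8 * (V + C^2) / (K - C)^2" for K
  have inner: "0 \<le> F a K \<and> F a K \<le> B K" if a: "a \<in> I" and K: "C < K" for a K
  proof -
    have le: "measure (completion (M a)) {\<omega> \<in> space (M a). \<bar>Y \<omega>\<bar> > K} \<le> B K"
      if "Y \<in> simple_integrals (M a) (X a) t" for Y
      unfolding B_def by (rule UT_single[OF L[OF a] V0 C0 re[OF a] im[OF a]]) (use t that K in auto)
    obtain Y0 where Y0: "Y0 \<in> simple_integrals (M a) (X a) t" using simple_integrals_ne[of t "M a" "X a"] t by auto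
    have bdd: "bdd_above ((\<lambda>Y. measure (completion (M a)) {\<omega> \<in> space (M a). \<bar>Y \<omega>\<bar> > K}) ` simple_integrals (M a) (X a) t)"
      using le by (intro bdd_aboveI2) auto
    have "0 \<le> F a K" unfolding F_def
      by (rule cSUP_upper2[OF bdd Y0]) simp
    moreover have "F a K \<le> B K" unfolding F_def
      by (rule cSUP_least) (use Y0 le in auto)
    ultimately show ?thesis ..
  qed
  have outer: "0 \<le> (SUP a\<in>I. F a K) \<and> (SUP a\<in>I. F a K) \<le> B K" if K: "C < K" for K
  proof -
    obtain a0 where a0: "a0 \<in> I" using I by blast
    have bdd: "bdd_above ((\<lambda>a. F a K) ` I)" using inner K by (intro bdd_aboveI2) auto
    have "0 \<le> (SUP a\<in>I. F a K)" by (rule cSUP_upper2[OF bdd a0]) (use inner[OF a0 K] in auto)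
    moreover have "(SUP a\<in>I. F a K) \<le> B K" by (rule cSUP_least) (use I inner K in auto)
    ultimately show ?thesis ..
  qed
  have Blim: "(B \<longlongrightarrow> 0) at_top"
  proof -
    have "filterlim (\<lambda>K. -C + K) at_top at_top"
      by (rule filterlim_tendsto_add_at_top[OF tendsto_const filterlim_ident])
    moreover have "(\<lambda>K. -C + K) = (\<lambda>K. K - C)" by (rule ext) simp
    ultimately have "filterlim (\<lambda>K. K - C) at_top at_top" by simp
    then have "filterlim (\<lambda>K. (K - C)^2) at_top at_top"
      by (intro filterlim_pow_at_top) auto
    then have "filterlim (\<lambda>K. (K - C)^2) at_infinity at_top" by (rule filterlim_at_top_imp_at_infinity)
    then show ?thesis unfolding B_def by (intro tendsto_divide_0[OF tendsto_const])
  qed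
  have ev: "eventually (\<lambda>K. C < K) at_top" by (rule eventually_gt_at_top)
  show "((\<lambda>K. SUP a\<in>I. SUP Y\<in>simple_integrals (M a) (X a) t.
                 measure (completion (M a)) {\<omega> \<in> space (M a). \<bar>Y \<omega>\<bar> > K}) \<longlongrightarrow> 0) at_top"
    unfolding F_def[symmetric]
  proof (rule tendsto_sandwich[OF _ _ tendsto_const Blim])
    show "eventually (\<lambda>K. 0 \<le> (SUP a\<in>I. F a K)) at_top" using ev by eventually_elim (use outer in auto)
    show "eventually (\<lambda>K. (SUP a\<in>I. F a K) \<le> B K) at_top" using ev by eventually_elim (use outer in auto)
  qed
qed

theorem proposition3p6:
  fixes M :: "real \<Rightarrow> 'a measure" and X :: "real \<Rightarrow> real \<Rightarrow> 'a \<Rightarrow> real"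
    and M' :: "real \<Rightarrow> 'b measure" and X' :: "real \<Rightarrow> real \<Rightarrow> 'b \<Rightarrow> real"
  shows "((\<forall>\<alpha>\<in>{0<..<1/2}. levy_process (M \<alpha>) (X \<alpha>)
              (driftless_subordinator_exponent (levy_measure_of_density (tss_density \<alpha>))))
           \<longrightarrow> uniformly_tight {0<..<1/2} M X)
       \<and> ((\<forall>\<alpha>\<in>{0<..<1/2}. levy_process (M' \<alpha>) (X' \<alpha>)
              (triplet_exponent 0 0 (levy_measure_of_density (mts_density \<alpha>))))
           \<longrightarrow> uniformly_tight {0<..<1/2} M' X')"
proof (intro conjI impI)
  assume H: "\<forall>\<alpha>\<in>{0<..<1/2}. levy_process (M \<alpha>) (X \<alpha>)
              (driftless_subordinator_exponent (levy_measure_of_density (tss_density \<alpha>)))"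
  show "uniformly_tight {0<..<1/2} M X"
  proof (rule UT_family[where V=1 and C=1])
    fix a h :: real assume a: "a \<in> {0<..<1/2}" and h: "0 < h" "h \<le> 1"
    have a': "0 < a" "a < 1" using a by auto
    note m2 = tss_moments(1)[OF a'] and m1 = tss_moments(2)[OF a']
    have "- 1 * h^2 / 2 \<le> - (LINT x|levy_measure_of_density (tss_density a). x^2) * h^2 / 2"
      using m2 by (intro divide_right_mono mult_right_mono) auto
    also have "\<dots> \<le> Re (driftless_subordinator_exponent (levy_measure_of_density (tss_density a)) h)"
      by (rule psi_tss_bounds(1)) (use m1 m2 in auto)
    finally show "- 1 * h^2 / 2 \<le> Re (driftless_subordinator_exponent (levy_measure_of_density (tss_density a)) h)" .
    have "\<bar>Im (driftless_subordinator_exponent (levy_measure_of_density (tss_density a)) h)\<bar>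
          \<le> (LINT x|levy_measure_of_density (tss_density a). \<bar>x\<bar>) * \<bar>h\<bar>"
      by (rule psi_tss_bounds(2)) (use m1 m2 in auto)
    also have "\<dots> = (LINT x|levy_measure_of_density (tss_density a). \<bar>x\<bar>) * h" using h by simp
    also have "\<dots> \<le> 1 * h" using m1 h by (intro mult_right_mono) auto
    finally show "\<bar>Im (driftless_subordinator_exponent (levy_measure_of_density (tss_density a)) h)\<bar> \<le> 1 * h" .
  qed (use H in auto)
next
  assume H: "\<forall>\<alpha>\<in>{0<..<1/2}. levy_process (M' \<alpha>) (X' \<alpha>)
              (triplet_exponent 0 0 (levy_measure_of_density (mts_density \<alpha>)))"
  show "uniformly_tight {0<..<1/2} M' X'"
  proof (rule UT_family[where V=4 and C=4])
    fix a h :: real assume a: "a \<in> {0<..<1/2}" and h: "0 < h" "h \<le> 1"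
    have a': "0 < a" "a < 1/2" using a by auto
    note m2 = mts_moments[OF a']
    have "- 4 * h^2 / 2 \<le> - (LINT x|levy_measure_of_density (mts_density a). x^2) * h^2 / 2"
      using m2 by (intro divide_right_mono mult_right_mono) auto
    also have "\<dots> \<le> Re (triplet_exponent 0 0 (levy_measure_of_density (mts_density a)) h)"
      by (rule psi_mts_bounds(1)) (use m2 h in auto)
    finally show "- 4 * h^2 / 2 \<le> Re (triplet_exponent 0 0 (levy_measure_of_density (mts_density a)) h)" .
    have "\<bar>Im (triplet_exponent 0 0 (levy_measure_of_density (mts_density a)) h)\<bar>
          \<le> (LINT x|levy_measure_of_density (mts_density a). x^2) * h"
      by (rule psi_mts_bounds(2)) (use m2 h in auto)
    also have "\<dots> \<le> 4 * h" using m2 h by (intro mult_right_mono) auto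
    finally show "\<bar>Im (triplet_exponent 0 0 (levy_measure_of_density (mts_density a)) h)\<bar> \<le> 4 * h" .
  qed (use H in auto)
qed


end
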